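(* Let $n\ge 1$, $m\ge 2$, $0\le k\le n-1$, and let $\mathcal{C}^k_{ac}$ be the class of all complete acyclic $k$-bounded CP-nets over $n$ variables of domain size $m$, over the instance space $\mathcal{X}_{swap}$. For every $c\in\mathcal{C}^k_{ac}$, letting $e_c$ denote the number of edges of $c$, \[(m-1)\mathcal{M}_k\le\mathrm{TD}(c,\mathcal{C}^k_{ac})\le e_c+n(m-1)\mathcal{U}_k.\]
   Context: Variables $V=\{v_1,\dots,v_n\}$, each with a finite domain of size $m$. An outcome assigns a value to every variable; $\mathcal{O}_X$ denotes assignments to $X\subseteq V$. A complete CP-net specifies for each $v_i$ a parent set $Pa(v_i)\subseteq V\setminus\{v_i\}$ and, for each context $\gamma\in\mathcal{O}_{Pa(v_i)}$, a strict total order $\succ^{v_i}_\gamma$ on $D_{v_i}$; parents are non-dummy. Its edges are the pairs $(v_j,v_i)$ with $v_j\in Pa(v_i)$; acyclic means this graph is acyclic; $k$-bounded means all $|Pa(v_i)|\le k$. Improving flip: changing only $v_i$ to a value preferred under $\succ^{v_i}_{o[Pa(v_i)]}$; $o'\succ o$ iff a nonempty sequence of improving flips leads from $o$ to $o'$. A swap is an ordered pair $x=(x.1,x.2)$ of outcomes differing in exactly one variable; $\mathcal{X}_{swap}$ contains exactly one ordering of each such pair (fixed arbitrarily); a CP-net $N$ is the concept $c_N(x)=1$ iff $x.1\succ x.2$. $\mathrm{TD}(c,\mathcal{C})$ is the minimum size of a set of labeled examples consistent with $c$ and with no other concept of $\mathcal{C}$. $\mathcal{M}_k=(n-k)m^k+\frac{m^k-1}{m-1}$.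 $\mathcal{U}_k$ is the smallest size of a set $S\subseteq\{1,\dots,m\}^{n-1}$ whose projection onto every set of $k$ coordinates contains all $m^k$ vectors. *)

theory Defs
  imports Complex_Main
begin

text \<open>Variables are v_0,...,v_{n-1} (indices i < n); every domain is {0..<m}.
  Outcomes are functions nat => nat, extensional (0 outside {0..<n}).\<close>

definition outcome :: "nat \<Rightarrow> nat \<Rightarrow> (nat \<Rightarrow> nat) \<Rightarrow> bool" where
  "outcome n m q \<longleftrightarrow> (\<forall>i<n. q i < m) \<and> (\<forall>i\<ge>n. q i = 0)"

text \<open>A CP-net is a pair (Pa, cpt): Pa i is the parent set of v_i, and
  cpt i q a b means a is preferred to b for v_i in the context q restricted to Pa i
  (cpt i q is required to depend only on the values of q on Pa i).\<close>

type_synonym cpnet = "(nat \<Rightarrow> nat set) \<times> (nat \<Rightarrow> (nat \<Rightarrow> nat) \<Rightarrow> nat \<Rightarrow> nat \<Rightarrow> bool)"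

definition strict_total_on :: "nat set \<Rightarrow> (nat \<Rightarrow> nat \<Rightarrow> bool) \<Rightarrow> bool" where
  "strict_total_on D r \<longleftrightarrow>
     (\<forall>a\<in>D. \<not> r a a) \<and>
     (\<forall>a\<in>D. \<forall>b\<in>D. \<forall>c\<in>D. r a b \<longrightarrow> r b c \<longrightarrow> r a c) \<and>
     (\<forall>a\<in>D. \<forall>b\<in>D. a \<noteq> b \<longrightarrow> r a b \<or> r b a)"

definition cp_edges :: "nat \<Rightarrow> cpnet \<Rightarrow> (nat \<times> nat) set" where
  "cp_edges n N = {(j, i). i < n \<and> j \<in> fst N i}"

definition complete_cpnet :: "nat \<Rightarrow> nat \<Rightarrow> cpnet \<Rightarrow> bool" where
  "complete_cpnet n m N \<longleftrightarrow>
     (\<forall>i<n. fst N i \<subseteq> {0..<n} - {i}) \<and>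
     \<comment> \<open>the preference order depends only on the context, i.e. the parent values\<close>
     (\<forall>i<n. \<forall>q p. outcome n m q \<longrightarrow> outcome n m p \<longrightarrow> (\<forall>j\<in>fst N i. q j = p j)
        \<longrightarrow> (\<forall>a<m. \<forall>b<m. snd N i q a b = snd N i p a b)) \<and>
     \<comment> \<open>each context gives a strict total order on the domain\<close>
     (\<forall>i<n. \<forall>q. outcome n m q \<longrightarrow> strict_total_on {0..<m} (snd N i q)) \<and>
     \<comment> \<open>parents are non-dummy\<close>
     (\<forall>i<n. \<forall>j\<in>fst N i. \<exists>q p. outcome n m q \<and> outcome n m p \<and>
        (\<forall>l\<in>fst N i - {j}. q l = p l) \<and>
        (\<exists>a<m. \<exists>b<m. snd N i q a b \<noteq> snd N i p a b))"

definition acyclic_cpnet :: "nat \<Rightarrow> cpnet \<Rightarrow> bool" where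
  "acyclic_cpnet n N \<longleftrightarrow> acyclic (cp_edges n N)"

definition k_bounded :: "nat \<Rightarrow> nat \<Rightarrow> cpnet \<Rightarrow> bool" where
  "k_bounded n k N \<longleftrightarrow> (\<forall>i<n. card (fst N i) \<le> k)"

definition improving_flip :: "nat \<Rightarrow> nat \<Rightarrow> cpnet \<Rightarrow> (nat \<Rightarrow> nat) \<Rightarrow> (nat \<Rightarrow> nat) \<Rightarrow> bool" where
  "improving_flip n m N q p \<longleftrightarrow> outcome n m q \<and> outcome n m p \<and>
     (\<exists>i<n. (\<forall>j. j \<noteq> i \<longrightarrow> q j = p j) \<and> snd N i q (p i) (q i))"

text \<open>dominates N p q: p \<succ> q, i.e. a nonempty sequence of improving flips leads from q to p\<close>
definition dominates :: "nat \<Rightarrow> nat \<Rightarrow> cpnet \<Rightarrow> (nat \<Rightarrow> nat) \<Rightarrow> (nat \<Rightarrow> nat) \<Rightarrow> bool" where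
  "dominates n m N p q \<longleftrightarrow> (improving_flip n m N)\<^sup>+\<^sup>+ q p"

definition is_swap :: "nat \<Rightarrow> nat \<Rightarrow> (nat \<Rightarrow> nat) \<Rightarrow> (nat \<Rightarrow> nat) \<Rightarrow> bool" where
  "is_swap n m q p \<longleftrightarrow> outcome n m q \<and> outcome n m p \<and>
     (\<exists>i<n. q i \<noteq> p i \<and> (\<forall>j. j \<noteq> i \<longrightarrow> q j = p j))"

definition swap_space :: "nat \<Rightarrow> nat \<Rightarrow> ((nat \<Rightarrow> nat) \<times> (nat \<Rightarrow> nat)) set \<Rightarrow> bool" where
  "swap_space n m X \<longleftrightarrow>
     (\<forall>x\<in>X. is_swap n m (fst x) (snd x)) \<and>
     (\<forall>q p. is_swap n m q p \<longrightarrow> ((q, p) \<in> X \<longleftrightarrow> (p, q) \<notin> X))"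

definition concept :: "nat \<Rightarrow> nat \<Rightarrow> ((nat \<Rightarrow> nat) \<times> (nat \<Rightarrow> nat)) set \<Rightarrow> cpnet
    \<Rightarrow> ((nat \<Rightarrow> nat) \<times> (nat \<Rightarrow> nat)) \<Rightarrow> bool" where
  "concept n m X N x \<longleftrightarrow> x \<in> X \<and> dominates n m N (fst x) (snd x)"

definition acyc_class :: "nat \<Rightarrow> nat \<Rightarrow> nat \<Rightarrow> ((nat \<Rightarrow> nat) \<times> (nat \<Rightarrow> nat)) set
    \<Rightarrow> (((nat \<Rightarrow> nat) \<times> (nat \<Rightarrow> nat)) \<Rightarrow> bool) set" where
  "acyc_class n m k X = {concept n m X N | N. complete_cpnet n m N \<and> acyclic_cpnet n N \<and> k_bounded n k N}"

definition teaching_set :: "'x set \<Rightarrow> ('x \<Rightarrow> bool) \<Rightarrow> ('x \<Rightarrow> bool) set \<Rightarrow> 'x set \<Rightarrow> bool" where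
  "teaching_set X c C S \<longleftrightarrow> S \<subseteq> X \<and> finite S \<and>
     (\<forall>c'\<in>C. (\<forall>x\<in>S. c' x = c x) \<longrightarrow> c' = c)"

definition TD :: "'x set \<Rightarrow> ('x \<Rightarrow> bool) \<Rightarrow> ('x \<Rightarrow> bool) set \<Rightarrow> nat" where
  "TD X c C = (LEAST t. \<exists>S. teaching_set X c C S \<and> card S = t)"

definition M_k :: "nat \<Rightarrow> nat \<Rightarrow> nat \<Rightarrow> real" where
  "M_k n m k = real (n - k) * real m ^ k + (real m ^ k - 1) / (real m - 1)"

definition k_universal :: "nat \<Rightarrow> nat \<Rightarrow> nat \<Rightarrow> nat list set \<Rightarrow> bool" where
  "k_universal n m k S \<longleftrightarrow>
     (\<forall>s\<in>S. length s = n - 1 \<and> set s \<subseteq> {1..m}) \<and>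
     (\<forall>I. I \<subseteq> {0..<n-1} \<longrightarrow> card I = k \<longrightarrow>
        (\<forall>v. (\<forall>i\<in>I. v i \<in> {1..m}) \<longrightarrow> (\<exists>s\<in>S. \<forall>i\<in>I. s ! i = v i)))"

definition U_k :: "nat \<Rightarrow> nat \<Rightarrow> nat \<Rightarrow> nat" where
  "U_k n m k = (LEAST t. \<exists>S. finite S \<and> k_universal n m k S \<and> card S = t)"

end

theory Submission
  imports Defs "HOL-Library.FuncSet"
begin

definition rk :: "nat \<Rightarrow> (nat \<Rightarrow> nat \<Rightarrow> bool) \<Rightarrow> nat \<Rightarrow> nat" where
  "rk m r x = card {y\<in>{0..<m}. r x y}"

definition el :: "nat \<Rightarrow> (nat \<Rightarrow> nat \<Rightarrow> bool) \<Rightarrow> nat \<Rightarrow> nat" where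
  "el m r t = inv_into {0..<m} (rk m r) t"

definition sw :: "(nat \<Rightarrow> nat \<Rightarrow> bool) \<Rightarrow> nat \<Rightarrow> nat \<Rightarrow> nat \<Rightarrow> nat \<Rightarrow> bool" where
  "sw r a b x y = (if (x = a \<and> y = b) \<or> (x = b \<and> y = a) then r y x else r x y)"

lemma sto_irrefl: assumes "strict_total_on {0..<m} r" "a < m" shows "\<not> r a a"
proof -
  have "a \<in> {0..<m}" using assms by simp
  thus ?thesis using assms(1) unfolding strict_total_on_def by blast
qed

lemma sto_trans: assumes "strict_total_on {0..<m} r" "a < m" "b < m" "c < m" "r a b" "r b c" shows "r a c"
proof -
  have "a \<in> {0..<m}" "b \<in> {0..<m}" "c \<in> {0..<m}" using assms by simp_all
  thus ?thesis using assms(1,5,6) unfolding strict_total_on_def by blast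
qed

lemma sto_total: assumes "strict_total_on {0..<m} r" "a < m" "b < m" "a \<noteq> b" shows "r a b \<or> r b a"
proof -
  have "a \<in> {0..<m}" "b \<in> {0..<m}" using assms by simp_all
  thus ?thesis using assms(1,4) unfolding strict_total_on_def by blast
qed

lemma sto_asym: assumes "strict_total_on {0..<m} r" "a < m" "b < m" "r a b" shows "\<not> r b a"
  using sto_trans[OF assms(1,2,3,2) assms(4)] sto_irrefl[OF assms(1,2)] by blast

lemma sto_cong: assumes "strict_total_on {0..<m} r" "\<forall>a<m. \<forall>b<m. r' a b = r a b" shows "strict_total_on {0..<m} r'"
proof -
  have "\<forall>a\<in>{0..<m}. \<forall>b\<in>{0..<m}. r' a b = r a b" using assms(2) by simp
  thus ?thesis using assms(1) unfolding strict_total_on_def by blast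
qed

lemma rk_cong: "(\<forall>b<m. r' a b = r a b) \<Longrightarrow> rk m r' a = rk m r a"
  unfolding rk_def by (rule arg_cong[where f=card]) auto

lemma rk_less: assumes "strict_total_on {0..<m} r" "x < m" shows "rk m r x < m"
proof -
  have "{y\<in>{0..<m}. r x y} \<subseteq> {0..<m} - {x}" using sto_irrefl[OF assms] by auto
  hence "rk m r x \<le> card ({0..<m} - {x})" unfolding rk_def by (intro card_mono) auto
  thus ?thesis using assms(2) by simp
qed

lemma rk_mono: assumes s: "strict_total_on {0..<m} r" and "x < m" "y < m" "r x y"
  shows "rk m r y < rk m r x"
proof -
  have sub: "{z\<in>{0..<m}. r y z} \<subseteq> {z\<in>{0..<m}. r x z}"
  proof
    fix z assume "z \<in> {z\<in>{0..<m}. r y z}"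
    thus "z \<in> {z\<in>{0..<m}. r x z}" using sto_trans[OF s, of x y z] assms by auto
  qed
  have "y \<in> {z\<in>{0..<m}. r x z}" "y \<notin> {z\<in>{0..<m}. r y z}"
    using assms sto_irrefl[OF s, of y] by auto
  hence "{z\<in>{0..<m}. r y z} \<subset> {z\<in>{0..<m}. r x z}" using sub by blast
  thus ?thesis unfolding rk_def by (intro psubset_card_mono) auto
qed

lemma rk_gt: assumes s: "strict_total_on {0..<m} r" and "x < m" "y < m" "rk m r y < rk m r x"
  shows "r x y"
proof (rule ccontr)
  assume "\<not> r x y"
  moreover have "x \<noteq> y" using assms(4) by auto
  ultimately have "r y x" using sto_total[OF s assms(2,3)] by blast
  thus False using rk_mono[OF s assms(3,2)] assms(4) by simp
qed

lemma rk_inj: assumes s: "strict_total_on {0..<m} r" shows "inj_on (rk m r) {0..<m}"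
proof (rule inj_onI)
  fix x y assume "x \<in> {0..<m}" "y \<in> {0..<m}" "rk m r x = rk m r y"
  hence xy: "x < m" "y < m" "rk m r x = rk m r y" by auto
  show "x = y"
  proof (rule ccontr)
    assume "x \<noteq> y"
    hence "r x y \<or> r y x" using sto_total[OF s xy(1,2)] by blast
    thus False using rk_mono[OF s xy(1,2)] rk_mono[OF s xy(2,1)] xy(3) by auto
  qed
qed

lemma rk_bij: assumes s: "strict_total_on {0..<m} r" shows "bij_betw (rk m r) {0..<m} {0..<m}"
proof -
  have i: "inj_on (rk m r) {0..<m}" by (rule rk_inj[OF s])
  have sub: "rk m r ` {0..<m} \<subseteq> {0..<m}" using rk_less[OF s] by auto
  have "card (rk m r ` {0..<m}) = card {0..<(m::nat)}" using card_image[OF i] by simp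
  hence "rk m r ` {0..<m} = {0..<m}" using sub by (intro card_subset_eq) auto
  thus ?thesis using i unfolding bij_betw_def by simp
qed

lemma el_props: assumes s: "strict_total_on {0..<m} r" and "t < m"
  shows "el m r t < m" "rk m r (el m r t) = t"
proof -
  have b: "bij_betw (rk m r) {0..<m} {0..<m}" by (rule rk_bij[OF s])
  have "t \<in> rk m r ` {0..<m}" using b assms(2) unfolding bij_betw_def by simp
  hence "inv_into {0..<m} (rk m r) t \<in> {0..<m}" by (rule inv_into_into)
  thus "el m r t < m" unfolding el_def by simp
  show "rk m r (el m r t) = t" unfolding el_def using assms(2) b
    by (simp add: bij_betw_inv_into_right)
qed

lemma el_rk: assumes s: "strict_total_on {0..<m} r" and "x < m" shows "el m r (rk m r x) = x"
  unfolding el_def using rk_inj[OF s] assms(2) by (simp add: inv_into_f_f)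

lemma el_inj: assumes s: "strict_total_on {0..<m} r" and "t < m" "t' < m" "el m r t = el m r t'"
  shows "t = t'"
proof -
  have "t = rk m r (el m r t)" using el_props(2)[OF s assms(2)] by simp
  also have "\<dots> = rk m r (el m r t')" using assms(4) by simp
  also have "\<dots> = t'" using el_props(2)[OF s assms(3)] by simp
  finally show ?thesis .
qed

lemma el_adj: assumes s: "strict_total_on {0..<m} r" and "0 < t" "t < m"
  shows "r (el m r t) (el m r (t - 1))"
    "\<forall>c<m. \<not> (r (el m r t) c \<and> r c (el m r (t - 1)))"
proof -
  show "r (el m r t) (el m r (t - 1))"
    using assms el_props[OF s] by (intro rk_gt[OF s]) auto
  show "\<forall>c<m. \<not> (r (el m r t) c \<and> r c (el m r (t - 1)))"
  proof (intro allI impI notI)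
    fix c assume "c < m" "r (el m r t) c \<and> r c (el m r (t - 1))"
    have e1: "el m r t < m" "rk m r (el m r t) = t" using el_props[OF s assms(3)] by auto
    have e2: "el m r (t-1) < m" "rk m r (el m r (t-1)) = t - 1" using el_props[OF s, of "t-1"] assms(3) by auto
    have "rk m r c < t" using rk_mono[OF s e1(1) \<open>c < m\<close>] e1 \<open>r (el m r t) c \<and> r c (el m r (t - 1))\<close> by simp
    moreover have "t - 1 < rk m r c" using rk_mono[OF s \<open>c < m\<close> e2(1)] e2 \<open>r (el m r t) c \<and> r c (el m r (t - 1))\<close> by simp
    ultimately show False by linarith
  qed
qed

lemma determ:
  assumes s: "strict_total_on {0..<m} r" and s': "strict_total_on {0..<m} r'"
    and h: "\<forall>t. 0 < t \<and> t < m \<longrightarrow> r' (el m r t) (el m r (t - 1))"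
  shows "\<forall>a<m. \<forall>b<m. r' a b = r a b"
proof -
  have base: "r' x y" if "x < m" "y < m" "rk m r x = rk m r y + 1" for x y
  proof -
    have "0 < rk m r x" "rk m r x < m" using that rk_less[OF s that(1)] by auto
    hence "r' (el m r (rk m r x)) (el m r (rk m r x - 1))"
      using h by blast
    moreover have "rk m r x - 1 = rk m r y" using that by simp
    moreover have e1: "el m r (rk m r x) = x" "el m r (rk m r y) = y" by (rule el_rk[OF s that(1)], rule el_rk[OF s that(2)])
    ultimately show ?thesis by (simp only: e1)
  qed
  have step: "\<forall>x<m. \<forall>y<m. rk m r x = rk m r y + d + 1 \<longrightarrow> r' x y" for d
  proof (induction d)
    case 0 thus ?case using base by simp
  next
    case (Suc d)
    show ?case
    proof (intro allI impI)
      fix x y assume xy: "x < m" "y < m" "rk m r x = rk m r y + Suc d + 1"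
      define z where "z = el m r (rk m r y + d + 1)"
      have zl: "rk m r y + d + 1 < m" using xy rk_less[OF s, of x] by simp
      have z: "z < m" "rk m r z = rk m r y + d + 1" using el_props[OF s zl] z_def by auto
      have "r' z y" using Suc z xy by blast
      moreover have "r' x z" using base xy z by simp
      ultimately show "r' x y" using sto_trans[OF s'] xy z by blast
    qed
  qed
  have fw: "r' a b" if "a < m" "b < m" "r a b" for a b
  proof -
    have "rk m r b < rk m r a" using rk_mono[OF s] that by blast
    hence "rk m r a = rk m r b + (rk m r a - rk m r b - 1) + 1" by simp
    then obtain d where "rk m r a = rk m r b + d + 1" by blast
    thus ?thesis using step that by blast
  qed
  show ?thesis
  proof (intro allI impI iffI)
    fix a b assume ab: "a < m" "b < m" "r' a b"
    show "r a b"
    proof (rule ccontr)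
      assume "\<not> r a b"
      moreover have "a \<noteq> b" using ab sto_irrefl[OF s'] by blast
      ultimately have "r b a" using sto_total[OF s] ab by blast
      hence "r' b a" using fw ab by blast
      thus False using sto_asym[OF s'] ab by blast
    qed
  next
    fix a b assume "a < m" "b < m" "r a b" thus "r' a b" using fw by blast
  qed
qed

lemma sw_trans:
  fixes r :: "nat \<Rightarrow> nat \<Rightarrow> bool"
  assumes s: "strict_total_on {0..<m} r"
  and ab: "a < m" "b < m" "r a b" and adj: "\<forall>c<m. \<not> (r a c \<and> r c b)"
  and xm: "x < m" "y < m" "z < m"
  and h1': "sw r a b x y"
  and h2': "sw r a b y z"
  shows "sw r a b x z"
proof -
  have ir: "\<And>x. x<m \<Longrightarrow> \<not> r x x" using sto_irrefl[OF s] .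
  have ne: "a \<noteq> b" using ab ir by blast
  have nba: "\<not> r b a" using sto_asym[OF s ab] .
  show ?thesis
  proof (cases "x = a \<and> y = b \<or> x = b \<and> y = a")
    case True
    hence h1: "r y x" using h1' unfolding sw_def by simp
    have xb: "x = b" "y = a" using True h1 nba by auto
    show ?thesis
    proof (cases "y = a \<and> z = b \<or> y = b \<and> z = a")
      case True2: True
      hence "z = b" using xb ne by auto
      hence False using h2' xb ir ab nba unfolding sw_def by auto
      thus ?thesis ..
    next
      case False2: False
      hence h2: "r a z" "z \<noteq> b" using h2' xb unfolding sw_def by auto
      have "z \<noteq> a" using h2 ir ab by auto
      have "r b z \<or> r z b" using sto_total[OF s ab(2) xm(3)] h2 by auto
      hence "r b z" using adj h2 xm by blast
      thus ?thesis using xb \<open>z \<noteq> a\<close> h2 unfolding sw_def by auto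
    qed
  next
    case False
    hence h1: "r x y" using h1' unfolding sw_def by simp
    show ?thesis
    proof (cases "y = a \<and> z = b \<or> y = b \<and> z = a")
      case True2: True
      hence h2: "r z y" using h2' unfolding sw_def by simp
      have yb: "y = b" "z = a" using True2 h2 nba by auto
      have "x \<noteq> a" using False yb by auto
      have "x \<noteq> b" using h1 yb ir ab by auto
      have "r x a \<or> r a x" using sto_total[OF s xm(1) ab(1)] \<open>x \<noteq> a\<close> by auto
      hence "r x a" using adj h1 yb xm by blast
      thus ?thesis using yb \<open>x \<noteq> a\<close> \<open>x \<noteq> b\<close> unfolding sw_def by auto
    next
      case False2: False
      hence h2: "r y z" using h2' unfolding sw_def by simp
      have xz: "r x z" using sto_trans[OF s xm h1 h2] .
      have "\<not> (x = a \<and> z = b)" using adj h1 h2 xm by blast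
      moreover have "\<not> (x = b \<and> z = a)" using xz nba by auto
      ultimately show ?thesis using xz unfolding sw_def by auto
    qed
  qed
qed

lemma sw_sto: assumes s: "strict_total_on {0..<m} r" and ab: "a < m" "b < m" "r a b"
  and adj: "\<forall>c<m. \<not> (r a c \<and> r c b)"
  shows "strict_total_on {0..<m} (sw r a b)"
proof -
  have ir: "\<And>x. x<m \<Longrightarrow> \<not> r x x" using sto_irrefl[OF s] .
  have tr: "\<And>x y z. x<m \<Longrightarrow> y<m \<Longrightarrow> z<m \<Longrightarrow> r x y \<Longrightarrow> r y z \<Longrightarrow> r x z" using sto_trans[OF s] .
  have to: "\<And>x y. x<m \<Longrightarrow> y<m \<Longrightarrow> x \<noteq> y \<Longrightarrow> r x y \<or> r y x" using sto_total[OF s] .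
  show ?thesis unfolding strict_total_on_def
  proof (intro conjI ballI impI)
    fix x assume "x \<in> {0..<m}" thus "\<not> sw r a b x x"
      using ir unfolding sw_def by auto
  next
    fix x y assume "x \<in> {0..<m}" "y \<in> {0..<m}" "x \<noteq> y"
    thus "sw r a b x y \<or> sw r a b y x"
      using to unfolding sw_def by auto
  next
    fix x y z assume xyz: "x \<in> {0..<m}" "y \<in> {0..<m}" "z \<in> {0..<m}"
      and h1: "sw r a b x y" and h2: "sw r a b y z"
    have xm: "x < m" "y < m" "z < m" using xyz by auto
    show "sw r a b x z"
      by (rule sw_trans[OF s ab adj xm h1 h2])
  qed
qed

lemma cp_dep: assumes "complete_cpnet n m N" "i < n" "outcome n m q" "outcome n m p"
  "\<forall>j\<in>fst N i. q j = p j" "a < m" "b < m"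
  shows "snd N i q a b = snd N i p a b"
  using assms unfolding complete_cpnet_def by blast

lemma cp_sto: assumes "complete_cpnet n m N" "i < n" "outcome n m q"
  shows "strict_total_on {0..<m} (snd N i q)"
  using assms unfolding complete_cpnet_def by blast

lemma cp_pa: assumes "complete_cpnet n m N" "i < n"
  shows "fst N i \<subseteq> {0..<n} - {i}"
  using assms unfolding complete_cpnet_def by blast

lemma cp_edges_sub: assumes "complete_cpnet n m N"
  shows "cp_edges n N \<subseteq> {0..<n} \<times> {0..<n}"
  using cp_pa[OF assms] unfolding cp_edges_def by auto

lemma outcome_upd: "outcome n m q \<Longrightarrow> i < n \<Longrightarrow> b < m \<Longrightarrow> outcome n m (q(i := b))"
  unfolding outcome_def by auto

definition W :: "nat \<Rightarrow> nat \<Rightarrow> cpnet \<Rightarrow> nat \<Rightarrow> nat" where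
  "W n m N u = (n * m) ^ card ((cp_edges n N)\<^sup>+ `` {u})"

definition phi :: "nat \<Rightarrow> nat \<Rightarrow> cpnet \<Rightarrow> (nat \<Rightarrow> nat) \<Rightarrow> nat" where
  "phi n m N w = (\<Sum>u\<in>{0..<n}. rk m (snd N u w) (w u) * W n m N u)"

lemma W_children:
  assumes c: "complete_cpnet n m N" and ac: "acyclic_cpnet n N" and m2: "m \<ge> 2" and i: "i < n"
  shows "(\<Sum>u\<in>{u\<in>{0..<n}. i \<in> fst N u}. (m - 1) * W n m N u) < W n m N i"
proof -
  let ?r = "cp_edges n N"
  let ?Ch = "{u\<in>{0..<n}. i \<in> fst N u}"
  let ?a = "\<lambda>u. card (?r\<^sup>+ `` {u})"
  define B where "B = n * m"
  have B1: "B \<ge> 1" using i m2 unfolding B_def by simp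
  have rsub: "?r\<^sup>+ \<subseteq> {0..<n} \<times> {0..<n}"
    by (rule trancl_subset_Sigma[OF cp_edges_sub[OF c]])
  have fin: "finite (?r\<^sup>+ `` {u})" for u
  proof (rule finite_subset[of _ "{0..<n}"])
    show "?r\<^sup>+ `` {u} \<subseteq> {0..<n}" using rsub by blast
  qed simp
  have acy: "acyclic ?r" using ac unfolding acyclic_cpnet_def .
  show ?thesis
  proof (cases "?Ch = {}")
    case True
    have z: "(\<Sum>u\<in>?Ch. (m - 1) * W n m N u) = 0" unfolding True by (rule sum.empty)
    have Wp: "W n m N i > 0" unfolding W_def using B1 B_def by simp
    show ?thesis by (subst z) (rule Wp)
  next
    case False
    have lt: "?a u < ?a i" if "u \<in> ?Ch" for u
    proof -
      have e: "(i, u) \<in> ?r" using that unfolding cp_edges_def by auto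
      have "?r\<^sup>+ `` {u} \<subseteq> ?r\<^sup>+ `` {i}"
      proof
        fix y assume "y \<in> ?r\<^sup>+ `` {u}"
        hence "(u, y) \<in> ?r\<^sup>+" by simp
        hence "(i, y) \<in> ?r\<^sup>+" by (rule trancl_into_trancl2[OF e])
        thus "y \<in> ?r\<^sup>+ `` {i}" by simp
      qed
      moreover have "(i, u) \<in> ?r\<^sup>+" using e by (rule r_into_trancl)
      hence "u \<in> ?r\<^sup>+ `` {i}" by simp
      moreover have "(u, u) \<notin> ?r\<^sup>+" using acy unfolding acyclic_def by blast
      hence "u \<notin> ?r\<^sup>+ `` {u}" by simp
      ultimately have "?r\<^sup>+ `` {u} \<subset> ?r\<^sup>+ `` {i}" by blast
      thus ?thesis using fin[of i] by (rule psubset_card_mono[rotated])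
    qed
    obtain u0 where "u0 \<in> ?Ch" using False by blast
    hence "?a u0 < ?a i" by (rule lt)
    hence ai: "?a i \<ge> 1" by simp
    have "(\<Sum>u\<in>?Ch. (m - 1) * W n m N u) \<le> (\<Sum>u\<in>?Ch. (m - 1) * B ^ (?a i - 1))"
    proof (rule sum_mono)
      fix u assume "u \<in> ?Ch"
      hence "?a u < ?a i" by (rule lt)
      hence "?a u \<le> ?a i - 1" by simp
      hence "B ^ ?a u \<le> B ^ (?a i - 1)" using B1 by (intro power_increasing) auto
      thus "(m - 1) * W n m N u \<le> (m - 1) * B ^ (?a i - 1)" unfolding W_def B_def by simp
    qed
    also have "\<dots> = card ?Ch * ((m - 1) * B ^ (?a i - 1))" by simp
    also have "\<dots> \<le> n * ((m - 1) * B ^ (?a i - 1))"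
    proof -
      have "card ?Ch \<le> card {0..<n}" by (intro card_mono) auto
      thus ?thesis by simp
    qed
    also have "\<dots> < n * (m * B ^ (?a i - 1))"
    proof -
      have "0 < B ^ (?a i - 1)" using B1 by simp
      moreover have "0 < n" using i by simp
      ultimately show ?thesis using m2 by simp
    qed
    also have "\<dots> = B ^ ?a i"
    proof -
      have "?a i = Suc (?a i - 1)" using ai by simp
      hence "B ^ ?a i = B ^ Suc (?a i - 1)" by (rule arg_cong)
      hence "B ^ ?a i = B * B ^ (?a i - 1)" by simp
      thus ?thesis unfolding B_def by simp
    qed
    finally show ?thesis unfolding W_def B_def by simp
  qed
qed

lemma flip_phi:
  assumes c: "complete_cpnet n m N" and ac: "acyclic_cpnet n N" and m2: "m \<ge> 2"
    and f: "improving_flip n m N q p"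
  shows "phi n m N q < phi n m N p"
proof -
  obtain i where i: "i < n" and eq: "\<forall>j. j \<noteq> i \<longrightarrow> q j = p j" and imp: "snd N i q (p i) (q i)"
    and oq: "outcome n m q" and op: "outcome n m p"
    using f unfolding improving_flip_def by blast
  let ?f = "\<lambda>w u. rk m (snd N u w) (w u) * W n m N u"
  let ?Ch = "{u\<in>{0..<n}. i \<in> fst N u}"
  let ?R = "{u\<in>{0..<n}. u \<noteq> i \<and> i \<notin> fst N u}"
  have split: "{0..<n} = insert i (?Ch \<union> ?R)" using i cp_pa[OF c i] by auto
  have iCh: "i \<notin> ?Ch \<union> ?R" using cp_pa[OF c i] by auto
  have disj: "?Ch \<inter> ?R = {}" by auto
  have phis: "phi n m N w = ?f w i + (\<Sum>u\<in>?Ch. ?f w u) + (\<Sum>u\<in>?R. ?f w u)" for w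
  proof -
    have "phi n m N w = sum (?f w) {0..<n}" unfolding phi_def by simp
    also have "\<dots> = sum (?f w) (insert i (?Ch \<union> ?R))" by (rule arg_cong[OF split])
    also have "\<dots> = ?f w i + (\<Sum>u\<in>?Ch \<union> ?R. ?f w u)" using iCh by (intro sum.insert) auto
    also have "(\<Sum>u\<in>?Ch \<union> ?R. ?f w u) = (\<Sum>u\<in>?Ch. ?f w u) + (\<Sum>u\<in>?R. ?f w u)"
      using disj by (intro sum.union_disjoint) auto
    finally show ?thesis by simp
  qed
  have qm: "\<And>j. j < n \<Longrightarrow> q j < m" using oq unfolding outcome_def by auto
  have pm: "\<And>j. j < n \<Longrightarrow> p j < m" using op unfolding outcome_def by auto
  have R: "(\<Sum>u\<in>?R. ?f q u) = (\<Sum>u\<in>?R. ?f p u)"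
  proof (rule sum.cong)
    fix u assume u: "u \<in> ?R"
    have "\<forall>j\<in>fst N u. q j = p j" using eq u by auto
    hence "\<forall>b<m. snd N u p (q u) b = snd N u q (q u) b"
      using cp_dep[OF c _ oq op] u qm by auto
    hence "rk m (snd N u p) (q u) = rk m (snd N u q) (q u)" by (rule rk_cong)
    moreover have "p u = q u" using eq u by auto
    ultimately show "?f q u = ?f p u" by simp
  qed simp
  have Chq: "(\<Sum>u\<in>?Ch. ?f q u) \<le> (\<Sum>u\<in>?Ch. (m - 1) * W n m N u)"
  proof (rule sum_mono)
    fix u assume u: "u \<in> ?Ch"
    have "rk m (snd N u q) (q u) < m" using rk_less[OF cp_sto[OF c _ oq]] u qm by auto
    hence "rk m (snd N u q) (q u) \<le> m - 1" by simp
    thus "?f q u \<le> (m - 1) * W n m N u" by (rule mult_le_mono1)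
  qed
  have Wc: "(\<Sum>u\<in>?Ch. (m - 1) * W n m N u) < W n m N i" by (rule W_children[OF c ac m2 i])
  have ii: "rk m (snd N i q) (q i) + 1 \<le> rk m (snd N i p) (p i)"
  proof -
    have "\<forall>j\<in>fst N i. q j = p j" using eq cp_pa[OF c i] by auto
    hence "\<forall>b<m. snd N i p (p i) b = snd N i q (p i) b"
      using cp_dep[OF c i oq op] pm[OF i] by auto
    hence "rk m (snd N i p) (p i) = rk m (snd N i q) (p i)" by (rule rk_cong)
    moreover have "rk m (snd N i q) (q i) < rk m (snd N i q) (p i)"
      using rk_mono[OF cp_sto[OF c i oq] pm[OF i] qm[OF i] imp] .
    ultimately show ?thesis by simp
  qed
  hence "(rk m (snd N i q) (q i) + 1) * W n m N i \<le> rk m (snd N i p) (p i) * W n m N i"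
    by (rule mult_le_mono1)
  hence iW: "?f q i + W n m N i \<le> ?f p i" by (simp add: add_mult_distrib)
  have "phi n m N q \<le> ?f q i + (\<Sum>u\<in>?Ch. (m - 1) * W n m N u) + (\<Sum>u\<in>?R. ?f q u)"
    using phis[of q] Chq by simp
  also have "\<dots> < ?f q i + W n m N i + (\<Sum>u\<in>?R. ?f p u)" using Wc R by simp
  also have "\<dots> \<le> ?f p i + (\<Sum>u\<in>?Ch. ?f p u) + (\<Sum>u\<in>?R. ?f p u)" using iW by simp
  also have "\<dots> = phi n m N p" using phis[of p] by simp
  finally show ?thesis .
qed

lemma dom_phi:
  assumes c: "complete_cpnet n m N" and ac: "acyclic_cpnet n N" and m2: "m \<ge> 2"
    and d: "dominates n m N p q"
  shows "phi n m N q < phi n m N p"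
  using d unfolding dominates_def
proof (induction rule: tranclp_induct)
  case (base y) thus ?case using flip_phi[OF c ac m2] by blast
next
  case (step y z) thus ?case using flip_phi[OF c ac m2, of y z] by linarith
qed

lemma dom_iff:
  assumes c: "complete_cpnet n m N" and ac: "acyclic_cpnet n N" and m2: "m \<ge> 2"
    and oq: "outcome n m q" and i: "i < n" and b: "b < m" "b \<noteq> q i"
  shows "dominates n m N (q(i := b)) q \<longleftrightarrow> snd N i q b (q i)"
proof
  let ?p = "q(i := b)"
  have op: "outcome n m ?p" using outcome_upd[OF oq i b(1)] .
  have qi: "q i < m" using oq i unfolding outcome_def by auto
  assume d: "dominates n m N ?p q"
  show "snd N i q b (q i)"
  proof (rule ccontr)
    assume "\<not> snd N i q b (q i)"
    hence "snd N i q (q i) b" using sto_total[OF cp_sto[OF c i oq] b(1) qi b(2)] by blast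
    moreover have "\<forall>j\<in>fst N i. ?p j = q j" using cp_pa[OF c i] by auto
    ultimately have "snd N i ?p (q i) b" using cp_dep[OF c i op oq _ qi b(1)] by simp
    hence "improving_flip n m N ?p q" unfolding improving_flip_def using op oq i by auto
    hence "phi n m N ?p < phi n m N q" using flip_phi[OF c ac m2] by blast
    moreover have "phi n m N q < phi n m N ?p" using dom_phi[OF c ac m2 d] .
    ultimately show False by simp
  qed
next
  let ?p = "q(i := b)"
  have op: "outcome n m ?p" using outcome_upd[OF oq i b(1)] .
  assume "snd N i q b (q i)"
  hence "improving_flip n m N q ?p" unfolding improving_flip_def using op oq i by auto
  thus "dominates n m N ?p q" unfolding dominates_def by blast
qed

definition swap_at :: "nat \<Rightarrow> nat \<Rightarrow> nat \<Rightarrow> ((nat \<Rightarrow> nat) \<times> (nat \<Rightarrow> nat)) \<Rightarrow> bool" where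
  "swap_at n m i x \<longleftrightarrow> outcome n m (fst x) \<and> outcome n m (snd x) \<and> i < n \<and>
     fst x i \<noteq> snd x i \<and> (\<forall>j. j \<noteq> i \<longrightarrow> fst x j = snd x j)"

lemma swap_at_ex: "is_swap n m q p \<Longrightarrow> \<exists>i. swap_at n m i (q, p)"
  unfolding is_swap_def swap_at_def by auto

lemma swap_at_unique: "swap_at n m i x \<Longrightarrow> swap_at n m j x \<Longrightarrow> i = j"
  unfolding swap_at_def by (metis (no_types, lifting))

lemma label:
  assumes c: "complete_cpnet n m N" and ac: "acyclic_cpnet n N" and m2: "m \<ge> 2"
    and s: "swap_at n m i x"
  shows "concept n m X N x \<longleftrightarrow> x \<in> X \<and> snd N i (snd x) (fst x i) (snd x i)"
proof -
  have f: "fst x = (snd x)(i := fst x i)" using s unfolding swap_at_def by auto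
  have "fst x i < m" using s unfolding swap_at_def outcome_def by auto
  hence "dominates n m N ((snd x)(i := fst x i)) (snd x) \<longleftrightarrow> snd N i (snd x) (fst x i) (snd x i)"
    using s by (intro dom_iff[OF c ac m2]) (auto simp: swap_at_def)
  thus ?thesis unfolding concept_def using f by metis
qed

lemma path_avoid:
  assumes rs: "r \<subseteq> V \<times> V" and nw: "\<forall>y. (w, y) \<notin> r"
    and p: "(v, x) \<in> r\<^sup>+" and vw: "v \<noteq> w" and xw: "x \<noteq> w"
  shows "(v, x) \<in> (r \<inter> ((V - {w}) \<times> (V - {w})))\<^sup>+"
  using p xw
proof (induction rule: trancl_induct)
  case (base y)
  have "v \<in> V" "y \<in> V" using base rs by auto
  hence "(v, y) \<in> r \<inter> ((V - {w}) \<times> (V - {w}))" using base vw by auto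
  thus ?case by (rule r_into_trancl)
next
  case (step y z)
  have yw: "y \<noteq> w" using step(2) nw by auto
  have "y \<in> V" "z \<in> V" using step(2) rs by auto
  hence "(y, z) \<in> r \<inter> ((V - {w}) \<times> (V - {w}))" using step(2) yw step(4) by auto
  moreover have "(v, y) \<in> (r \<inter> ((V - {w}) \<times> (V - {w})))\<^sup>+" using step(3) yw by blast
  ultimately show ?case by (rule trancl_into_trancl[rotated])
qed

lemma topo_sum:
  fixes f :: "nat \<Rightarrow> nat"
  assumes mono: "\<And>a b. a \<le> b \<Longrightarrow> f a \<le> f b"
  shows "finite V \<Longrightarrow> r \<subseteq> V \<times> V \<Longrightarrow> acyclic r \<Longrightarrow>
    (\<Sum>t<card V. f t) \<le> (\<Sum>v\<in>V. f (card (V - {v} - r\<^sup>+ `` {v})))"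
proof (induction "card V" arbitrary: V r)
  case 0
  hence "V = {}" by simp
  thus ?case by simp
next
  case (Suc c)
  hence Vne: "V \<noteq> {}" by auto
  then obtain x0 where "x0 \<in> V" by blast
  have fr: "finite r" using finite_subset[OF Suc.prems(2)] Suc.prems(1) by simp
  have wf: "wf (r\<inverse>)" using finite_acyclic_wf_converse[OF fr Suc.prems(3)] .
  obtain w where w: "w \<in> V" and wmin: "\<And>y. (y, w) \<in> r\<inverse> \<Longrightarrow> y \<notin> V"
    using wfE_min[OF wf \<open>x0 \<in> V\<close>] by blast
  have nw: "\<forall>y. (w, y) \<notin> r"
  proof (intro allI notI)
    fix y assume "(w, y) \<in> r"
    hence "y \<in> V" "y \<notin> V" using wmin Suc.prems(2) by auto
    thus False by simp
  qed
  define V' where "V' = V - {w}"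
  define r' where "r' = r \<inter> (V' \<times> V')"
  have cV': "c = card V'" using Suc.hyps(2) w Suc.prems(1) unfolding V'_def by simp
  have fV': "finite V'" using Suc.prems(1) unfolding V'_def by simp
  have rV': "r' \<subseteq> V' \<times> V'" unfolding r'_def by blast
  have aV': "acyclic r'" using acyclic_subset[OF Suc.prems(3)] unfolding r'_def by blast
  have IH: "(\<Sum>t<card V'. f t) \<le> (\<Sum>v\<in>V'. f (card (V' - {v} - r'\<^sup>+ `` {v})))"
    by (rule Suc.hyps(1)[OF cV' fV' rV' aV'])
  have le: "card (V' - {v} - r'\<^sup>+ `` {v}) \<le> card (V - {v} - r\<^sup>+ `` {v})" if v: "v \<in> V'" for v
  proof (rule card_mono)
    show "finite (V - {v} - r\<^sup>+ `` {v})" using Suc.prems(1) by simp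
    show "V' - {v} - r'\<^sup>+ `` {v} \<subseteq> V - {v} - r\<^sup>+ `` {v}"
    proof
      fix x assume x: "x \<in> V' - {v} - r'\<^sup>+ `` {v}"
      have "(v, x) \<notin> r\<^sup>+"
      proof
        assume "(v, x) \<in> r\<^sup>+"
        hence "(v, x) \<in> r'\<^sup>+" using path_avoid[OF Suc.prems(2) nw] v x unfolding V'_def r'_def by auto
        thus False using x by auto
      qed
      thus "x \<in> V - {v} - r\<^sup>+ `` {v}" using x unfolding V'_def by auto
    qed
  qed
  have wt: "r\<^sup>+ `` {w} = {}"
  proof -
    have "(w, y) \<notin> r\<^sup>+" for y
    proof
      assume "(w, y) \<in> r\<^sup>+"
      then obtain z where "(w, z) \<in> r" by (meson tranclD)
      thus False using nw by auto
    qed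
    thus ?thesis by auto
  qed
  have cw: "card (V - {w} - r\<^sup>+ `` {w}) = c" using cV' wt unfolding V'_def by simp
  have "(\<Sum>t<card V. f t) = (\<Sum>t<c. f t) + f c" using Suc.hyps(2)[symmetric] by simp
  also have "\<dots> \<le> (\<Sum>v\<in>V'. f (card (V' - {v} - r'\<^sup>+ `` {v}))) + f c" using IH cV' by simp
  also have "\<dots> \<le> (\<Sum>v\<in>V'. f (card (V - {v} - r\<^sup>+ `` {v}))) + f c"
    using le mono by (intro add_mono sum_mono) auto
  also have "\<dots> = (\<Sum>v\<in>V. f (card (V - {v} - r\<^sup>+ `` {v})))"
  proof -
    have "(\<Sum>v\<in>V. f (card (V - {v} - r\<^sup>+ `` {v}))) = f (card (V - {w} - r\<^sup>+ `` {w})) + (\<Sum>v\<in>V'. f (card (V - {v} - r\<^sup>+ `` {v})))"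
      unfolding V'_def using Suc.prems(1) w by (rule sum.remove)
    thus ?thesis using cw by simp
  qed
  finally show ?case .
qed

definition eff :: "nat \<Rightarrow> nat \<Rightarrow> nat set \<Rightarrow> ((nat \<Rightarrow> nat) \<Rightarrow> nat \<Rightarrow> nat \<Rightarrow> bool) \<Rightarrow> nat set" where
  "eff n m P g = {j\<in>P. \<exists>q p. outcome n m q \<and> outcome n m p \<and> (\<forall>l\<in>P-{j}. q l = p l) \<and>
      (\<exists>a<m. \<exists>b<m. g q a b \<noteq> g p a b)}"

lemma eff_sub: "eff n m P g \<subseteq> P" unfolding eff_def by auto

lemma eff_nondummy: assumes "j \<in> eff n m P g"
  shows "\<exists>q p. outcome n m q \<and> outcome n m p \<and> (\<forall>l\<in>eff n m P g - {j}. q l = p l) \<and>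
      (\<exists>a<m. \<exists>b<m. g q a b \<noteq> g p a b)"
proof -
  have "\<exists>q p. outcome n m q \<and> outcome n m p \<and> (\<forall>l\<in>P-{j}. q l = p l) \<and>
      (\<exists>a<m. \<exists>b<m. g q a b \<noteq> g p a b)"
    using assms unfolding eff_def by simp
  then obtain q p where h: "outcome n m q" "outcome n m p" "\<forall>l\<in>P-{j}. q l = p l"
      "\<exists>a<m. \<exists>b<m. g q a b \<noteq> g p a b" by blast
  have "eff n m P g - {j} \<subseteq> P - {j}" using eff_sub by blast
  hence "\<forall>l\<in>eff n m P g - {j}. q l = p l" using h(3) by blast
  thus ?thesis using h(1,2,4) by blast
qed

lemma eff_dep:
  assumes fin: "finite P" and Pn: "P \<subseteq> {0..<n}"
    and dep: "\<forall>q p. outcome n m q \<longrightarrow> outcome n m p \<longrightarrow> (\<forall>j\<in>P. q j = p j) \<longrightarrow> (\<forall>a<m. \<forall>b<m. g q a b = g p a b)"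
    and oq: "outcome n m q" and op: "outcome n m p" and ag: "\<forall>j\<in>eff n m P g. q j = p j"
  shows "\<forall>a<m. \<forall>b<m. g q a b = g p a b"
proof -
  have main: "finite F \<Longrightarrow> F \<subseteq> P - eff n m P g \<Longrightarrow> \<forall>q p. outcome n m q \<longrightarrow> outcome n m p \<longrightarrow>
      (\<forall>j\<in>P-F. q j = p j) \<longrightarrow> (\<forall>a<m. \<forall>b<m. g q a b = g p a b)" for F
  proof (induction F rule: finite_induct)
    case empty
    show ?case
    proof (intro allI impI)
      fix q p a b assume h: "outcome n m q" "outcome n m p" "\<forall>j\<in>P - {}. q j = p j" "a < m" "b < m"
      have "\<forall>j\<in>P. q j = p j" using h(3) by simp
      hence "\<forall>a<m. \<forall>b<m. g q a b = g p a b" using dep h(1,2) by blast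
      thus "g q a b = g p a b" using h(4,5) by blast
    qed
  next
    case (insert j F)
    show ?case
    proof (intro allI impI)
      fix q p a b assume oq: "outcome n m q" and op: "outcome n m p"
        and ag: "\<forall>j'\<in>P - insert j F. q j' = p j'" and ab: "a < m" "b < m"
      have jP: "j \<in> P" "j \<notin> eff n m P g" using insert.prems by auto
      have jn: "j < n" using jP Pn by auto
      have pj: "p j < m" using op jn unfolding outcome_def by blast
      define q' where "q' = q(j := p j)"
      have oq': "outcome n m q'" unfolding q'_def by (rule outcome_upd[OF oq jn pj])
      have ag': "\<forall>j'\<in>P - F. q' j' = p j'"
      proof
        fix j' assume "j' \<in> P - F"
        thus "q' j' = p j'" using ag unfolding q'_def by (cases "j' = j") auto
      qed
      have Fs: "F \<subseteq> P - eff n m P g" using insert.prems by simp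
      have e1: "g q' a b = g p a b" using insert.IH[OF Fs] oq' op ag' ab by blast
      have agj: "\<forall>l\<in>P-{j}. q l = q' l" unfolding q'_def by auto
      have "\<not> (\<exists>q p. outcome n m q \<and> outcome n m p \<and> (\<forall>l\<in>P-{j}. q l = p l) \<and>
          (\<exists>a<m. \<exists>b<m. g q a b \<noteq> g p a b))" using jP unfolding eff_def by simp
      hence "\<not> (\<exists>a<m. \<exists>b<m. g q a b \<noteq> g q' a b)" using oq oq' agj by blast
      hence "g q a b = g q' a b" using ab by blast
      thus "g q a b = g p a b" using e1 by simp
    qed
  qed
  have f2: "finite (P - eff n m P g)" using fin by simp
  have a2: "\<forall>j\<in>P - (P - eff n m P g). q j = p j" using ag by auto
  show ?thesis using main[OF f2 subset_refl] oq op a2 by blast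
qed

lemma reach_repl:
  assumes "(v, y) \<in> ({e\<in>r. snd e \<noteq> v} \<union> Q \<times> {v})\<^sup>*"
  shows "y = v \<or> (v, y) \<in> r\<^sup>+"
  using assms
proof (induction rule: rtrancl_induct)
  case base thus ?case by simp
next
  case (step y z)
  show ?case
  proof (cases "(y, z) \<in> Q \<times> {v}")
    case True thus ?thesis by auto
  next
    case False
    hence yz: "(y, z) \<in> r" using step(2) by auto
    from step(3) show ?thesis
    proof
      assume "y = v" thus ?thesis using yz by auto
    next
      assume "(v, y) \<in> r\<^sup>+" hence "(v, z) \<in> r\<^sup>+" using yz by (rule trancl_into_trancl)
      thus ?thesis by simp
    qed
  qed
qed

lemma acyc_repl:
  assumes ac: "acyclic r" and fin: "finite P" and vP: "v \<notin> P" and nd: "P \<inter> r\<^sup>+ `` {v} = {}"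
  shows "acyclic ({e\<in>r. snd e \<noteq> v} \<union> P \<times> {v})"
proof -
  have "finite Q \<Longrightarrow> Q \<subseteq> P \<Longrightarrow> acyclic ({e\<in>r. snd e \<noteq> v} \<union> Q \<times> {v})" for Q
  proof (induction Q rule: finite_induct)
    case empty
    have "{e\<in>r. snd e \<noteq> v} \<union> {} \<times> {v} \<subseteq> r" by auto
    thus ?case by (rule acyclic_subset[OF ac])
  next
    case (insert p Q)
    have eq: "{e\<in>r. snd e \<noteq> v} \<union> insert p Q \<times> {v} = insert (p, v) ({e\<in>r. snd e \<noteq> v} \<union> Q \<times> {v})" by auto
    have pP: "p \<in> P" using insert.prems by simp
    have pv: "p \<noteq> v" using pP vP by auto
    have pv2: "(v, p) \<notin> r\<^sup>+" using pP nd by auto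
    have "(v, p) \<notin> ({e\<in>r. snd e \<noteq> v} \<union> Q \<times> {v})\<^sup>*"
    proof
      assume "(v, p) \<in> ({e\<in>r. snd e \<noteq> v} \<union> Q \<times> {v})\<^sup>*"
      hence "p = v \<or> (v, p) \<in> r\<^sup>+" by (rule reach_repl)
      thus False using pv pv2 by simp
    qed
    moreover have "acyclic ({e\<in>r. snd e \<noteq> v} \<union> Q \<times> {v})" using insert.IH insert.prems by simp
    ultimately show ?case unfolding eq acyclic_insert by blast
  qed
  thus ?thesis using fin by blast
qed

lemma cp_nd: assumes "complete_cpnet n m N" "i < n" "j \<in> fst N i"
  shows "\<exists>q p. outcome n m q \<and> outcome n m p \<and>
        (\<forall>l\<in>fst N i - {j}. q l = p l) \<and>
        (\<exists>a<m. \<exists>b<m. snd N i q a b \<noteq> snd N i p a b)"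
  using assms unfolding complete_cpnet_def by blast

definition extc :: "nat set \<Rightarrow> (nat \<Rightarrow> nat) \<Rightarrow> nat \<Rightarrow> nat" where
  "extc P \<gamma> = (\<lambda>j. if j \<in> P then \<gamma> j else 0)"

lemma extc_outcome: assumes "P \<subseteq> {0..<n}" "\<forall>j\<in>P. \<gamma> j < m" "m \<ge> 2"
  shows "outcome n m (extc P \<gamma>)"
  using assms unfolding outcome_def extc_def by auto

lemma lb_key:
  assumes m2: "m \<ge> 2" and sp: "swap_space n m X" and c: "complete_cpnet n m N"
    and ac: "acyclic_cpnet n N" and kb: "k_bounded n k N"
    and T: "teaching_set X (concept n m X N) (acyc_class n m k X) S"
    and v: "v < n" and Pa: "fst N v \<subseteq> P" and Psub: "P \<subseteq> {0..<n} - {v}"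
    and nd: "P \<inter> (cp_edges n N)\<^sup>+ `` {v} = {}" and cP: "card P \<le> k"
    and \<gamma>: "\<forall>j\<in>P. \<gamma> j < m" and t: "0 < t" "t < m"
  shows "\<exists>x\<in>S. swap_at n m v x \<and> (\<forall>j\<in>P. snd x j = \<gamma> j) \<and>
     ((fst x v = el m (snd N v (extc P \<gamma>)) t \<and> snd x v = el m (snd N v (extc P \<gamma>)) (t - 1)) \<or>
      (fst x v = el m (snd N v (extc P \<gamma>)) (t - 1) \<and> snd x v = el m (snd N v (extc P \<gamma>)) t))"
proof (rule ccontr)
  define o0 where "o0 = extc P \<gamma>"
  define r0 where "r0 = snd N v o0"
  define a where "a = el m r0 t"
  define b where "b = el m r0 (t - 1)"
  assume none: "\<not> (\<exists>x\<in>S. swap_at n m v x \<and> (\<forall>j\<in>P. snd x j = \<gamma> j) \<and>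
     ((fst x v = el m (snd N v (extc P \<gamma>)) t \<and> snd x v = el m (snd N v (extc P \<gamma>)) (t - 1)) \<or>
      (fst x v = el m (snd N v (extc P \<gamma>)) (t - 1) \<and> snd x v = el m (snd N v (extc P \<gamma>)) t)))"
  hence none': "\<And>x. x \<in> S \<Longrightarrow> swap_at n m v x \<Longrightarrow> (\<forall>j\<in>P. snd x j = \<gamma> j) \<Longrightarrow>
     \<not> ((fst x v = a \<and> snd x v = b) \<or> (fst x v = b \<and> snd x v = a))"
    unfolding a_def b_def r0_def o0_def by blast
  have Pn: "P \<subseteq> {0..<n}" using Psub by blast
  have vP: "v \<notin> P" using Psub by blast
  have finP: "finite P" using Pn finite_subset by blast
  have oo: "outcome n m o0" unfolding o0_def by (rule extc_outcome[OF Pn \<gamma> m2])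
  have sto0: "strict_total_on {0..<m} r0" unfolding r0_def by (rule cp_sto[OF c v oo])
  have ab: "a < m" "b < m" using el_props[OF sto0] t unfolding a_def b_def by auto
  have rab: "r0 a b" using el_adj(1)[OF sto0 t] unfolding a_def b_def .
  have adj0: "\<forall>c<m. \<not> (r0 a c \<and> r0 c b)" using el_adj(2)[OF sto0 t] unfolding a_def b_def .
  have anb: "a \<noteq> b" using rab sto_irrefl[OF sto0 ab(1)] by auto
  have rba: "\<not> r0 b a" using sto_asym[OF sto0 ab rab] .
  define cond where "cond q = (\<forall>j\<in>P. q j = \<gamma> j)" for q :: "nat \<Rightarrow> nat"
  define g where "g q x y = (if cond q then sw (snd N v q) a b x y else snd N v q x y)"
    for q :: "nat \<Rightarrow> nat" and x y
  have agr: "\<forall>x<m. \<forall>y<m. snd N v q x y = r0 x y" if oq: "outcome n m q" and cq: "cond q" for q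
  proof (intro allI impI)
    fix x y assume "x < m" "y < m"
    have "\<forall>j\<in>fst N v. q j = o0 j" using cq Pa unfolding cond_def o0_def extc_def by auto
    thus "snd N v q x y = r0 x y" unfolding r0_def using cp_dep[OF c v oq oo] \<open>x < m\<close> \<open>y < m\<close> by blast
  qed
  have gdep: "\<forall>q p. outcome n m q \<longrightarrow> outcome n m p \<longrightarrow> (\<forall>j\<in>P. q j = p j) \<longrightarrow>
      (\<forall>x<m. \<forall>y<m. g q x y = g p x y)"
  proof (intro allI impI)
    fix q p x y assume oq: "outcome n m q" and op: "outcome n m p" and ag: "\<forall>j\<in>P. q j = p j"
      and xy: "x < m" "y < m"
    have cc: "cond q = cond p" using ag unfolding cond_def by auto
    have "\<forall>j\<in>fst N v. q j = p j" using ag Pa by auto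
    hence e: "\<forall>x<m. \<forall>y<m. snd N v q x y = snd N v p x y" using cp_dep[OF c v oq op] by blast
    show "g q x y = g p x y" unfolding g_def sw_def using cc e xy by simp
  qed
  have gsto: "strict_total_on {0..<m} (g q)" if oq: "outcome n m q" for q
  proof (cases "cond q")
    case True
    have e: "\<forall>x<m. \<forall>y<m. snd N v q x y = r0 x y" using agr[OF oq True] .
    have "strict_total_on {0..<m} (sw (snd N v q) a b)"
    proof (rule sw_sto[OF cp_sto[OF c v oq] ab])
      show "snd N v q a b" using e rab ab by simp
      show "\<forall>c<m. \<not> (snd N v q a c \<and> snd N v q c b)" using e adj0 ab by simp
    qed
    thus ?thesis unfolding g_def using True by simp
  next
    case False
    thus ?thesis unfolding g_def using cp_sto[OF c v oq] by simp
  qed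
  define E where "E = eff n m P g"
  have EP: "E \<subseteq> P" unfolding E_def by (rule eff_sub)
  define N' where "N' = ((\<lambda>i. if i = v then E else fst N i), (\<lambda>i. if i = v then g else snd N i))"
  have fN': "fst N' i = (if i = v then E else fst N i)" for i unfolding N'_def by simp
  have sN': "snd N' i = (if i = v then g else snd N i)" for i unfolding N'_def by simp
  have c': "complete_cpnet n m N'"
    unfolding complete_cpnet_def
  proof (intro conjI allI impI ballI)
    fix i assume i: "i < n"
    show "fst N' i \<subseteq> {0..<n} - {i}"
      using cp_pa[OF c i] EP Psub unfolding fN' by auto
  next
    fix i q p x y assume i: "i < n" and oq: "outcome n m q" and op: "outcome n m p"
      and ag: "\<forall>j\<in>fst N' i. q j = p j" and xy: "x < m" "y < m"
    show "snd N' i q x y = snd N' i p x y"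
    proof (cases "i = v")
      case True
      have "\<forall>j\<in>eff n m P g. q j = p j" using ag True unfolding fN' E_def by simp
      hence "\<forall>x<m. \<forall>y<m. g q x y = g p x y" by (rule eff_dep[OF finP Pn gdep oq op])
      thus ?thesis unfolding sN' using True xy by simp
    next
      case False
      have "\<forall>j\<in>fst N i. q j = p j" using ag False unfolding fN' by simp
      thus ?thesis unfolding sN' using False cp_dep[OF c i oq op _ xy] by simp
    qed
  next
    fix i q assume i: "i < n" and oq: "outcome n m q"
    show "strict_total_on {0..<m} (snd N' i q)"
      unfolding sN' using gsto[OF oq] cp_sto[OF c i oq] by simp
  next
    fix i j assume i: "i < n" and j: "j \<in> fst N' i"
    show "\<exists>q p. outcome n m q \<and> outcome n m p \<and> (\<forall>l\<in>fst N' i - {j}. q l = p l) \<and>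
        (\<exists>a<m. \<exists>b<m. snd N' i q a b \<noteq> snd N' i p a b)"
    proof (cases "i = v")
      case True
      have "j \<in> eff n m P g" using j True unfolding fN' E_def by simp
      hence "\<exists>q p. outcome n m q \<and> outcome n m p \<and> (\<forall>l\<in>eff n m P g - {j}. q l = p l) \<and>
        (\<exists>a<m. \<exists>b<m. g q a b \<noteq> g p a b)" by (rule eff_nondummy)
      thus ?thesis unfolding fN' sN' E_def using True by simp
    next
      case False
      have "j \<in> fst N i" using j False unfolding fN' by simp
      thus ?thesis unfolding fN' sN' using False cp_nd[OF c i] by simp
    qed
  qed
  have ac': "acyclic_cpnet n N'"
  proof -
    let ?r = "cp_edges n N"
    have "cp_edges n N' \<subseteq> {e\<in>?r. snd e \<noteq> v} \<union> P \<times> {v}"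
      unfolding cp_edges_def fN' using EP by auto
    moreover have "acyclic ({e\<in>?r. snd e \<noteq> v} \<union> P \<times> {v})"
      using acyc_repl[OF _ finP vP nd] ac unfolding acyclic_cpnet_def by blast
    ultimately show ?thesis unfolding acyclic_cpnet_def by (rule acyclic_subset[rotated])
  qed
  have kb': "k_bounded n k N'"
    unfolding k_bounded_def
  proof (intro allI impI)
    fix i assume i: "i < n"
    show "card (fst N' i) \<le> k"
    proof (cases "i = v")
      case True
      have "card E \<le> card P" using card_mono[OF finP EP] .
      thus ?thesis using True cP unfolding fN' by simp
    next
      case False thus ?thesis using kb i unfolding k_bounded_def fN' by simp
    qed
  qed
  have inC: "concept n m X N' \<in> acyc_class n m k X"
    unfolding acyc_class_def using c' ac' kb' by blast
  have SX: "S \<subseteq> X" using T unfolding teaching_set_def by blast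
  have agreeS: "\<forall>x\<in>S. concept n m X N' x = concept n m X N x"
  proof
    fix x assume xS: "x \<in> S"
    hence xX: "x \<in> X" using SX by blast
    hence "is_swap n m (fst x) (snd x)" using sp unfolding swap_space_def by blast
    then obtain i where si: "swap_at n m i (fst x, snd x)" using swap_at_ex by blast
    hence si': "swap_at n m i x" by simp
    have l1: "concept n m X N x \<longleftrightarrow> x \<in> X \<and> snd N i (snd x) (fst x i) (snd x i)"
      by (rule label[OF c ac m2 si'])
    have l2: "concept n m X N' x \<longleftrightarrow> x \<in> X \<and> snd N' i (snd x) (fst x i) (snd x i)"
      by (rule label[OF c' ac' m2 si'])
    have "snd N' i (snd x) (fst x i) (snd x i) = snd N i (snd x) (fst x i) (snd x i)"
    proof (cases "i = v")
      case False thus ?thesis unfolding sN' by simp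
    next
      case True
      show ?thesis
      proof (cases "cond (snd x)")
        case cT: True
        hence "\<forall>j\<in>P. snd x j = \<gamma> j" unfolding cond_def .
        hence "\<not> ((fst x v = a \<and> snd x v = b) \<or> (fst x v = b \<and> snd x v = a))"
          using none'[OF xS] si' True by blast
        thus ?thesis unfolding sN' g_def sw_def using True cT by auto
      next
        case False
        thus ?thesis unfolding sN' g_def using True by simp
      qed
    qed
    thus "concept n m X N' x = concept n m X N x" using l1 l2 by simp
  qed
  have eqc: "concept n m X N' = concept n m X N"
    using T inC agreeS unfolding teaching_set_def by blast
  define o1 where "o1 = o0(v := a)"
  define o2 where "o2 = o0(v := b)"
  have oo1: "outcome n m o1" unfolding o1_def by (rule outcome_upd[OF oo v ab(1)])
  have oo2: "outcome n m o2" unfolding o2_def by (rule outcome_upd[OF oo v ab(2)])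
  have c1: "cond o1" "cond o2" using vP unfolding cond_def o1_def o2_def o0_def extc_def by auto
  have s12: "swap_at n m v (o1, o2)" "swap_at n m v (o2, o1)"
    unfolding swap_at_def using oo1 oo2 v anb unfolding o1_def o2_def by auto
  have "is_swap n m o1 o2" unfolding is_swap_def using oo1 oo2 v anb unfolding o1_def o2_def by auto
  hence X12: "(o1, o2) \<in> X \<longleftrightarrow> (o2, o1) \<notin> X" using sp unfolding swap_space_def by blast
  have e1: "\<forall>x<m. \<forall>y<m. snd N v o1 x y = r0 x y" by (rule agr[OF oo1 c1(1)])
  have e2: "\<forall>x<m. \<forall>y<m. snd N v o2 x y = r0 x y" by (rule agr[OF oo2 c1(2)])
  show False
  proof (cases "(o1, o2) \<in> X")
    case True
    have "concept n m X N (o1, o2) \<longleftrightarrow> snd N v o2 a b"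
      using label[OF c ac m2 s12(1)] True unfolding o1_def o2_def by simp
    hence A: "concept n m X N (o1, o2)" using e2 rab ab by simp
    have "concept n m X N' (o1, o2) \<longleftrightarrow> g o2 a b"
      using label[OF c' ac' m2 s12(1)] True unfolding o1_def o2_def sN' by simp
    hence B: "\<not> concept n m X N' (o1, o2)" using c1 e2 rba ab unfolding g_def sw_def by simp
    show False using A B eqc by simp
  next
    case False
    hence F: "(o2, o1) \<in> X" using X12 by blast
    have "concept n m X N (o2, o1) \<longleftrightarrow> snd N v o1 b a"
      using label[OF c ac m2 s12(2)] F unfolding o1_def o2_def by simp
    hence A: "\<not> concept n m X N (o2, o1)" using e1 rba ab by simp
    have "concept n m X N' (o2, o1) \<longleftrightarrow> g o1 b a"
      using label[OF c' ac' m2 s12(2)] F unfolding o1_def o2_def sN' by simp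
    hence B: "concept n m X N' (o2, o1)" using c1 e1 rab ab anb unfolding g_def sw_def by simp
    show False using A B eqc by simp
  qed
qed

lemma lb_count:
  assumes m2: "m \<ge> 2" and sp: "swap_space n m X" and c: "complete_cpnet n m N"
    and ac: "acyclic_cpnet n N" and kb: "k_bounded n k N"
    and T: "teaching_set X (concept n m X N) (acyc_class n m k X) S"
    and v: "v < n" and Pa: "fst N v \<subseteq> P" and Psub: "P \<subseteq> {0..<n} - {v}"
    and nd: "P \<inter> (cp_edges n N)\<^sup>+ `` {v} = {}" and cP: "card P \<le> k"
  shows "(m - 1) * m ^ card P \<le> card {x\<in>S. swap_at n m v x}"
proof -
  define D where "D = (PiE P (\<lambda>_. {0..<m})) \<times> {1..<m}"
  define Q where "Q = (\<lambda>p x. x \<in> S \<and> swap_at n m v x \<and> (\<forall>j\<in>P. snd x j = fst p j) \<and>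
     ((fst x v = el m (snd N v (extc P (fst p))) (snd p) \<and> snd x v = el m (snd N v (extc P (fst p))) (snd p - 1)) \<or>
      (fst x v = el m (snd N v (extc P (fst p))) (snd p - 1) \<and> snd x v = el m (snd N v (extc P (fst p))) (snd p))))"
  define F where "F p = (SOME x. Q p x)" for p
  have Pn: "P \<subseteq> {0..<n}" using Psub by blast
  have finP: "finite P" using Pn finite_subset by blast
  have finS: "finite S" using T unfolding teaching_set_def by blast
  have QF: "Q p (F p)" if p: "p \<in> D" for p
  proof -
    have g: "\<forall>j\<in>P. fst p j < m" using p unfolding D_def by (auto simp: PiE_def Pi_def)
    have t: "0 < snd p" "snd p < m" using p unfolding D_def by auto
    have "\<exists>x. Q p x" unfolding Q_def using lb_key[OF m2 sp c ac kb T v Pa Psub nd cP g t] by blast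
    thus ?thesis unfolding F_def by (rule someI_ex)
  qed
  have inj: "inj_on F D"
  proof (rule inj_onI)
    fix p p' assume p: "p \<in> D" and p': "p' \<in> D" and eq: "F p = F p'"
    define x where "x = F p"
    have q1: "Q p x" using QF[OF p] unfolding x_def .
    have q2: "Q p' x" using QF[OF p'] eq unfolding x_def by simp
    have fe: "fst p = fst p'"
    proof (rule PiE_ext)
      show "fst p \<in> PiE P (\<lambda>_. {0..<m})" "fst p' \<in> PiE P (\<lambda>_. {0..<m})" using p p' unfolding D_def by auto
      fix j assume "j \<in> P" thus "fst p j = fst p' j" using q1 q2 unfolding Q_def by auto
    qed
    define r where "r = snd N v (extc P (fst p))"
    have g: "\<forall>j\<in>P. fst p j < m" using p unfolding D_def by (auto simp: PiE_def Pi_def)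
    have sto: "strict_total_on {0..<m} r" unfolding r_def
      by (rule cp_sto[OF c v extc_outcome[OF Pn g m2]])
    have t: "0 < snd p" "snd p < m" "0 < snd p'" "snd p' < m" using p p' unfolding D_def by auto
    have A: "(fst x v = el m r (snd p) \<and> snd x v = el m r (snd p - 1)) \<or>
      (fst x v = el m r (snd p - 1) \<and> snd x v = el m r (snd p))" using q1 unfolding Q_def r_def by simp
    have B: "(fst x v = el m r (snd p') \<and> snd x v = el m r (snd p' - 1)) \<or>
      (fst x v = el m r (snd p' - 1) \<and> snd x v = el m r (snd p'))" using q2 fe unfolding Q_def r_def by simp
    have inj2: "\<And>s s'. s < m \<Longrightarrow> s' < m \<Longrightarrow> el m r s = el m r s' \<Longrightarrow> s = s'"
      using el_inj[OF sto] by blast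
    have lt: "snd p - 1 < m" "snd p' - 1 < m" using t by auto
    have "snd p = snd p'"
    proof -
      have c1: "el m r (snd p) = el m r (snd p') \<or>
            (el m r (snd p) = el m r (snd p' - 1) \<and> el m r (snd p - 1) = el m r (snd p'))"
        using A B by metis
      show ?thesis
      proof (cases "el m r (snd p) = el m r (snd p')")
        case True thus ?thesis using inj2[OF t(2) t(4)] by simp
      next
        case False
        hence "el m r (snd p) = el m r (snd p' - 1)" "el m r (snd p - 1) = el m r (snd p')" using c1 by auto
        hence "snd p = snd p' - 1" "snd p - 1 = snd p'" using inj2[OF t(2) lt(2)] inj2[OF lt(1) t(4)] by auto
        thus ?thesis using t by linarith
      qed
    qed
    thus "p = p'" using fe by (simp add: prod_eq_iff)
  qed
  have sub: "F ` D \<subseteq> {x\<in>S. swap_at n m v x}" using QF unfolding Q_def by blast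
  have "card D = card (F ` D)" using card_image[OF inj] by simp
  also have "\<dots> \<le> card {x\<in>S. swap_at n m v x}" using finS sub by (intro card_mono) auto
  finally have "card D \<le> card {x\<in>S. swap_at n m v x}" .
  moreover have "card D = m ^ card P * (m - 1)"
    unfolding D_def using card_PiE[OF finP, of "\<lambda>_. {0..<m}"] by (simp add: card_cartesian_product)
  ultimately show ?thesis by (simp add: mult.commute)
qed

lemma extend_subset:
  assumes "finite A" "B \<subseteq> A" "card B \<le> c" "c \<le> card A"
  obtains C where "B \<subseteq> C" "C \<subseteq> A" "card C = c"
proof -
  have fB: "finite B" using assms finite_subset by blast
  have "c - card B \<le> card (A - B)" using assms card_Diff_subset[OF fB assms(2)] by simp
  then obtain D where D: "D \<subseteq> A - B" "card D = c - card B" "finite D"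
    by (rule obtain_subset_with_card_n)
  have "card (B \<union> D) = card B + card D" using D fB by (intro card_Un_disjoint) auto
  hence "card (B \<union> D) = c" using D assms(3) by simp
  thus ?thesis using that[of "B \<union> D"] D assms(2) by blast
qed

lemma lb_nat:
  assumes m2: "m \<ge> 2" and sp: "swap_space n m X" and c: "complete_cpnet n m N"
    and ac: "acyclic_cpnet n N" and kb: "k_bounded n k N"
    and T: "teaching_set X (concept n m X N) (acyc_class n m k X) S"
  shows "(\<Sum>t<n. (m - 1) * m ^ min t k) \<le> card S"
proof -
  let ?r = "cp_edges n N"
  define d where "d v = card ({0..<n} - {v} - ?r\<^sup>+ `` {v})" for v
  have finS: "finite S" using T unfolding teaching_set_def by blast
  have rsub: "?r \<subseteq> {0..<n} \<times> {0..<n}" by (rule cp_edges_sub[OF c])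
  have acy: "acyclic ?r" using ac unfolding acyclic_cpnet_def .
  have per: "(m - 1) * m ^ min (d v) k \<le> card {x\<in>S. swap_at n m v x}" if v: "v < n" for v
  proof -
    let ?ND = "{0..<n} - {v} - ?r\<^sup>+ `` {v}"
    have PaND: "fst N v \<subseteq> ?ND"
    proof
      fix j assume j: "j \<in> fst N v"
      hence e: "(j, v) \<in> ?r" using v unfolding cp_edges_def by auto
      have "j \<in> {0..<n} - {v}" using cp_pa[OF c v] j by auto
      moreover have "(v, j) \<notin> ?r\<^sup>+"
      proof
        assume "(v, j) \<in> ?r\<^sup>+"
        hence "(v, v) \<in> ?r\<^sup>+" using e by (rule trancl_into_trancl)
        thus False using acy unfolding acyclic_def by blast
      qed
      ultimately show "j \<in> ?ND" by simp
    qed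
    have cPa: "card (fst N v) \<le> min (d v) k"
    proof -
      have "card (fst N v) \<le> d v" unfolding d_def using PaND by (intro card_mono) auto
      moreover have "card (fst N v) \<le> k" using kb v unfolding k_bounded_def by simp
      ultimately show ?thesis by simp
    qed
    obtain P where P: "fst N v \<subseteq> P" "P \<subseteq> ?ND" "card P = min (d v) k"
    proof (rule extend_subset[of ?ND "fst N v" "min (d v) k"])
      show "finite ?ND" by simp
      show "fst N v \<subseteq> ?ND" by (rule PaND)
      show "card (fst N v) \<le> min (d v) k" by (rule cPa)
      show "min (d v) k \<le> card ?ND" unfolding d_def by simp
    qed
    have Psub: "P \<subseteq> {0..<n} - {v}" using P(2) by blast
    have nd: "P \<inter> ?r\<^sup>+ `` {v} = {}" using P(2) by blast
    have cP: "card P \<le> k" using P(3) by simp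
    show ?thesis using lb_count[OF m2 sp c ac kb T v P(1) Psub nd cP] P(3) by simp
  qed
  have mono: "\<And>a b. a \<le> b \<Longrightarrow> (m - 1) * m ^ min a k \<le> (m - 1) * m ^ min b k"
    using m2 by (intro mult_le_mono2 power_increasing) auto
  have "(\<Sum>t<n. (m - 1) * m ^ min t k) = (\<Sum>t<card {0..<n}. (m - 1) * m ^ min t k)" by simp
  also have "\<dots> \<le> (\<Sum>v\<in>{0..<n}. (m - 1) * m ^ min (d v) k)"
    unfolding d_def by (rule topo_sum[OF mono finite_atLeastLessThan rsub acy])
  also have "\<dots> \<le> (\<Sum>v\<in>{0..<n}. card {x\<in>S. swap_at n m v x})"
    using per by (intro sum_mono) auto
  also have "\<dots> = card (\<Union>v\<in>{0..<n}. {x\<in>S. swap_at n m v x})"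
  proof (rule card_UN_disjoint[symmetric])
    show "finite {0..<n}" by simp
    show "\<forall>i\<in>{0..<n}. finite {x \<in> S. swap_at n m i x}" using finS by simp
    show "\<forall>i\<in>{0..<n}. \<forall>j\<in>{0..<n}. i \<noteq> j \<longrightarrow> {x \<in> S. swap_at n m i x} \<inter> {x \<in> S. swap_at n m j x} = {}"
      using swap_at_unique by blast
  qed
  also have "\<dots> \<le> card S" using finS by (intro card_mono) auto
  finally show ?thesis .
qed

definition idx :: "nat \<Rightarrow> nat \<Rightarrow> nat" where "idx i j = (if j < i then j else j - 1)"
definition unidx :: "nat \<Rightarrow> nat \<Rightarrow> nat" where "unidx i t = (if t < i then t else t + 1)"
definition mk :: "nat \<Rightarrow> nat \<Rightarrow> nat list \<Rightarrow> nat \<Rightarrow> nat" where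
  "mk n i s = (\<lambda>j. if j < n \<and> j \<noteq> i then s ! idx i j - 1 else 0)"
definition orient :: "((nat \<Rightarrow> nat) \<times> (nat \<Rightarrow> nat)) set \<Rightarrow> ((nat \<Rightarrow> nat) \<times> (nat \<Rightarrow> nat))
    \<Rightarrow> ((nat \<Rightarrow> nat) \<times> (nat \<Rightarrow> nat))" where
  "orient X y = (if y \<in> X then y else (snd y, fst y))"

lemma mk_outcome:
  assumes "length s = n - 1" "set s \<subseteq> {1..m}" "i < n" "0 < m"
  shows "outcome n m (mk n i s)"
  unfolding outcome_def
proof (intro conjI allI impI)
  fix j assume j: "j < n"
  show "mk n i s j < m"
  proof (cases "j \<noteq> i")
    case True
    have "idx i j < n - 1" using j True assms(3) unfolding idx_def by auto
    hence "s ! idx i j \<in> set s" using assms(1) by simp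
    hence "s ! idx i j \<in> {1..m}" using assms(2) by blast
    thus ?thesis unfolding mk_def using True j by auto
  next
    case False
    thus ?thesis unfolding mk_def using assms(4) by auto
  qed
next
  fix j assume "n \<le> j" thus "mk n i s j = 0" unfolding mk_def by simp
qed

lemma univ_match:
  assumes U: "k_universal n m k U" and kn: "k \<le> n - 1" and i: "i < n"
    and Q: "Q \<subseteq> {0..<n} - {i}" and cQ: "card Q \<le> k" and oq: "outcome n m q"
  shows "\<exists>s\<in>U. \<forall>j\<in>Q. mk n i s j = q j"
proof -
  have injI: "inj_on (idx i) ({0..<n} - {i})"
    unfolding inj_on_def idx_def by auto
  define I where "I = idx i ` Q"
  have Isub: "I \<subseteq> {0..<n-1}" unfolding I_def idx_def using Q i by auto
  have cI: "card I = card Q" unfolding I_def using inj_on_subset[OF injI Q] by (simp add: card_image)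
  obtain I' where I': "I \<subseteq> I'" "I' \<subseteq> {0..<n-1}" "card I' = k"
    using extend_subset[of "{0..<n-1}" I k] Isub cI cQ kn by auto
  define vv where "vv t = q (unidx i t) + 1" for t
  have vv: "\<forall>t\<in>I'. vv t \<in> {1..m}"
  proof
    fix t assume "t \<in> I'"
    hence "t < n - 1" using I' by auto
    hence "unidx i t < n" unfolding unidx_def by auto
    hence "q (unidx i t) < m" using oq unfolding outcome_def by auto
    thus "vv t \<in> {1..m}" unfolding vv_def by auto
  qed
  have "\<forall>I. I \<subseteq> {0..<n-1} \<longrightarrow> card I = k \<longrightarrow>
        (\<forall>v. (\<forall>i\<in>I. v i \<in> {1..m}) \<longrightarrow> (\<exists>s\<in>U. \<forall>i\<in>I. s ! i = v i))"
    using U unfolding k_universal_def by blast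
  hence "\<exists>s\<in>U. \<forall>t\<in>I'. s ! t = vv t" using I'(2,3) vv by blast
  then obtain s where s: "s \<in> U" "\<forall>t\<in>I'. s ! t = vv t" by blast
  have "\<forall>j\<in>Q. mk n i s j = q j"
  proof
    fix j assume j: "j \<in> Q"
    have jn: "j < n" "j \<noteq> i" using j Q by auto
    have "idx i j \<in> I'" using j I' unfolding I_def by auto
    hence "s ! idx i j = vv (idx i j)" using s by blast
    moreover have "unidx i (idx i j) = j" using jn unfolding idx_def unidx_def by auto
    ultimately show "mk n i s j = q j" unfolding mk_def vv_def using jn by simp
  qed
  thus ?thesis using s by blast
qed

lemma orient_in:
  assumes sp: "swap_space n m X" and "is_swap n m q p"
  shows "orient X (q, p) \<in> X"
  using assms unfolding swap_space_def orient_def by auto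

lemma cp_upd_same:
  assumes c: "complete_cpnet n m N" and i: "i < n" and o: "outcome n m w" and b: "b < m"
    and x: "x < m" and y: "y < m"
  shows "snd N i (w(i := b)) x y = snd N i w x y"
proof -
  have "\<forall>j\<in>fst N i. (w(i := b)) j = w j" using cp_pa[OF c i] by auto
  thus ?thesis using cp_dep[OF c i outcome_upd[OF o i b] o _ x y] by simp
qed

lemma agree_pair:
  assumes m2: "m \<ge> 2" and sp: "swap_space n m X"
    and c: "complete_cpnet n m N" and ac: "acyclic_cpnet n N"
    and c': "complete_cpnet n m N'" and ac': "acyclic_cpnet n N'"
    and o: "outcome n m w" and i: "i < n" and ab: "a < m" "b < m" "a \<noteq> b"
    and ag: "concept n m X N' (orient X (w(i := a), w(i := b))) = concept n m X N (orient X (w(i := a), w(i := b)))"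
  shows "snd N' i w a b = snd N i w a b"
proof -
  have oa: "outcome n m (w(i := a))" by (rule outcome_upd[OF o i ab(1)])
  have ob: "outcome n m (w(i := b))" by (rule outcome_upd[OF o i ab(2)])
  have s1: "swap_at n m i (w(i := a), w(i := b))" "swap_at n m i (w(i := b), w(i := a))"
    unfolding swap_at_def using oa ob i ab by auto
  have isw: "is_swap n m (w(i := a)) (w(i := b))" unfolding is_swap_def using oa ob i ab by auto
  have X12: "(w(i := a), w(i := b)) \<in> X \<longleftrightarrow> (w(i := b), w(i := a)) \<notin> X"
    using sp isw unfolding swap_space_def by blast
  show ?thesis
  proof (cases "(w(i := a), w(i := b)) \<in> X")
    case True
    hence or: "orient X (w(i := a), w(i := b)) = (w(i := a), w(i := b))" unfolding orient_def by simp
    have "concept n m X N (w(i := a), w(i := b)) \<longleftrightarrow> snd N i (w(i := b)) a b"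
      using label[OF c ac m2 s1(1)] True by simp
    hence e1: "concept n m X N (w(i := a), w(i := b)) \<longleftrightarrow> snd N i w a b"
      using cp_upd_same[OF c i o ab(2) ab(1) ab(2)] by simp
    have "concept n m X N' (w(i := a), w(i := b)) \<longleftrightarrow> snd N' i (w(i := b)) a b"
      using label[OF c' ac' m2 s1(1)] True by simp
    hence e2: "concept n m X N' (w(i := a), w(i := b)) \<longleftrightarrow> snd N' i w a b"
      using cp_upd_same[OF c' i o ab(2) ab(1) ab(2)] by simp
    show ?thesis using ag e1 e2 or by simp
  next
    case False
    hence T: "(w(i := b), w(i := a)) \<in> X" using X12 by blast
    hence or: "orient X (w(i := a), w(i := b)) = (w(i := b), w(i := a))" using False unfolding orient_def by simp
    have "concept n m X N (w(i := b), w(i := a)) \<longleftrightarrow> snd N i (w(i := a)) b a"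
      using label[OF c ac m2 s1(2)] T by simp
    hence e1: "concept n m X N (w(i := b), w(i := a)) \<longleftrightarrow> snd N i w b a"
      using cp_upd_same[OF c i o ab(1) ab(2) ab(1)] by simp
    have "concept n m X N' (w(i := b), w(i := a)) \<longleftrightarrow> snd N' i (w(i := a)) b a"
      using label[OF c' ac' m2 s1(2)] T by simp
    hence e2: "concept n m X N' (w(i := b), w(i := a)) \<longleftrightarrow> snd N' i w b a"
      using cp_upd_same[OF c' i o ab(1) ab(2) ab(1)] by simp
    have t1: "snd N i w b a \<longleftrightarrow> \<not> snd N i w a b"
      using sto_total[OF cp_sto[OF c i o] ab] sto_asym[OF cp_sto[OF c i o] ab(1,2)] by blast
    have t2: "snd N' i w b a \<longleftrightarrow> \<not> snd N' i w a b"
      using sto_total[OF cp_sto[OF c' i o] ab] sto_asym[OF cp_sto[OF c' i o] ab(1,2)] by blast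
    show ?thesis using ag e1 e2 or t1 t2 by simp
  qed
qed

definition exm :: "((nat \<Rightarrow> nat) \<times> (nat \<Rightarrow> nat)) set \<Rightarrow> cpnet \<Rightarrow> nat \<Rightarrow> nat \<Rightarrow> nat \<Rightarrow> nat list \<Rightarrow> nat
   \<Rightarrow> ((nat \<Rightarrow> nat) \<times> (nat \<Rightarrow> nat))" where
  "exm X N n m i s t = orient X ((mk n i s)(i := el m (snd N i (mk n i s)) t),
      (mk n i s)(i := el m (snd N i (mk n i s)) (t - 1)))"

lemma exm_facts:
  assumes m2: "m \<ge> 2" and sp: "swap_space n m X" and c: "complete_cpnet n m N" and ac: "acyclic_cpnet n N"
    and s: "length s = n - 1" "set s \<subseteq> {1..m}" and i: "i < n" and t: "0 < t" "t < m"
  shows "exm X N n m i s t \<in> X"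
    and "\<And>N'. complete_cpnet n m N' \<Longrightarrow> acyclic_cpnet n N' \<Longrightarrow>
       concept n m X N' (exm X N n m i s t) = concept n m X N (exm X N n m i s t) \<Longrightarrow>
       snd N' i (mk n i s) (el m (snd N i (mk n i s)) t) (el m (snd N i (mk n i s)) (t - 1))"
proof -
  define w where "w = mk n i s"
  define r where "r = snd N i w"
  have o: "outcome n m w" unfolding w_def using mk_outcome[OF s i] m2 by simp
  have sto: "strict_total_on {0..<m} r" unfolding r_def by (rule cp_sto[OF c i o])
  define a where "a = el m r t"
  define b where "b = el m r (t - 1)"
  have ab: "a < m" "b < m" using el_props[OF sto] t unfolding a_def b_def by auto
  have rab: "r a b" unfolding a_def b_def by (rule el_adj(1)[OF sto t])
  have anb: "a \<noteq> b" using rab sto_irrefl[OF sto ab(1)] by auto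
  have ex: "exm X N n m i s t = orient X (w(i := a), w(i := b))"
    unfolding exm_def w_def[symmetric] r_def[symmetric] a_def b_def ..
  have isw: "is_swap n m (w(i := a)) (w(i := b))" unfolding is_swap_def
    using outcome_upd[OF o i ab(1)] outcome_upd[OF o i ab(2)] i anb by auto
  show "exm X N n m i s t \<in> X" unfolding ex by (rule orient_in[OF sp isw])
  fix N' assume c': "complete_cpnet n m N'" and ac': "acyclic_cpnet n N'"
    and ag: "concept n m X N' (exm X N n m i s t) = concept n m X N (exm X N n m i s t)"
  have "snd N' i w a b = snd N i w a b"
    using agree_pair[OF m2 sp c ac c' ac' o i ab anb] ag unfolding ex by simp
  hence "snd N' i w a b" using rab unfolding r_def by simp
  thus "snd N' i (mk n i s) (el m (snd N i (mk n i s)) t) (el m (snd N i (mk n i s)) (t - 1))"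
    unfolding w_def[symmetric] r_def[symmetric] a_def[symmetric] b_def[symmetric] .
qed

lemma edge_ex:
  assumes m2: "m \<ge> 2" and kn: "k \<le> n - 1" and sp: "swap_space n m X" and c: "complete_cpnet n m N"
    and ac: "acyclic_cpnet n N" and kb: "k_bounded n k N" and U: "k_universal n m k U"
    and S1: "S1 = (\<Union>i\<in>{0..<n}. \<Union>s\<in>U. (\<lambda>t. exm X N n m i s t) ` {1..<m})"
    and e: "(j, i) \<in> cp_edges n N"
  shows "\<exists>y\<in>X. \<forall>N'. complete_cpnet n m N' \<and> acyclic_cpnet n N' \<and>
      (\<forall>x\<in>S1 \<union> {y}. concept n m X N' x = concept n m X N x) \<longrightarrow> j \<in> fst N' i"
proof -
  have i: "i < n" and j: "j \<in> fst N i" using e unfolding cp_edges_def by auto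
  obtain q p where oq: "outcome n m q" and op: "outcome n m p"
    and qp: "\<forall>l\<in>fst N i - {j}. q l = p l" and dif: "\<exists>a<m. \<exists>b<m. snd N i q a b \<noteq> snd N i p a b"
    using cp_nd[OF c i j] by blast
  have Us: "\<forall>s\<in>U. length s = n - 1 \<and> set s \<subseteq> {1..m}" using U unfolding k_universal_def by blast
  have cPa: "card (fst N i) \<le> k" using kb i unfolding k_bounded_def by simp
  obtain s where sU: "s \<in> U" and sm: "\<forall>l\<in>fst N i. mk n i s l = q l"
    using univ_match[OF U kn i cp_pa[OF c i] cPa oq] by blast
  have sl: "length s = n - 1" "set s \<subseteq> {1..m}" using Us sU by auto
  define w where "w = mk n i s"
  have o: "outcome n m w" unfolding w_def using mk_outcome[OF sl i] m2 by simp
  define rq where "rq = snd N i w"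
  define rp where "rp = snd N i p"
  have stoq: "strict_total_on {0..<m} rq" unfolding rq_def by (rule cp_sto[OF c i o])
  have stop: "strict_total_on {0..<m} rp" unfolding rp_def by (rule cp_sto[OF c i op])
  have eq_q: "\<forall>a<m. \<forall>b<m. rq a b = snd N i q a b"
    unfolding rq_def using cp_dep[OF c i o oq] sm unfolding w_def by blast
  have "\<exists>t. 0 < t \<and> t < m \<and> \<not> rp (el m rq t) (el m rq (t - 1))"
  proof (rule ccontr)
    assume "\<not> ?thesis"
    hence "\<forall>t. 0 < t \<and> t < m \<longrightarrow> rp (el m rq t) (el m rq (t - 1))" by blast
    hence "\<forall>a<m. \<forall>b<m. rp a b = rq a b" by (rule determ[OF stoq stop])
    thus False using dif eq_q unfolding rp_def by auto
  qed
  then obtain t where t: "0 < t" "t < m" and nrp: "\<not> rp (el m rq t) (el m rq (t - 1))" by blast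
  define a where "a = el m rq t"
  define b where "b = el m rq (t - 1)"
  have ab: "a < m" "b < m" using el_props[OF stoq] t unfolding a_def b_def by auto
  have rab: "rq a b" unfolding a_def b_def by (rule el_adj(1)[OF stoq t])
  have anb: "a \<noteq> b" using rab sto_irrefl[OF stoq ab(1)] by auto
  have jn: "j < n" using cp_pa[OF c i] j by auto
  have pj: "p j < m" using op jn unfolding outcome_def by blast
  define w' where "w' = w(j := p j)"
  have o': "outcome n m w'" unfolding w'_def by (rule outcome_upd[OF o jn pj])
  have eq_p: "\<forall>a<m. \<forall>b<m. snd N i w' a b = rp a b"
  proof -
    have "\<forall>l\<in>fst N i. w' l = p l"
    proof
      fix l assume l: "l \<in> fst N i"
      show "w' l = p l"
      proof (cases "l = j")
        case True thus ?thesis unfolding w'_def by simp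
      next
        case False thus ?thesis unfolding w'_def w_def using sm qp l by auto
      qed
    qed
    thus ?thesis unfolding rp_def using cp_dep[OF c i o' op] by blast
  qed
  define y where "y = orient X (w'(i := a), w'(i := b))"
  have isw: "is_swap n m (w'(i := a)) (w'(i := b))" unfolding is_swap_def
    using outcome_upd[OF o' i ab(1)] outcome_upd[OF o' i ab(2)] i anb by auto
  have yX: "y \<in> X" unfolding y_def by (rule orient_in[OF sp isw])
  have "t \<in> {1..<m}" using t by simp
  hence "exm X N n m i s t \<in> (\<lambda>t. exm X N n m i s t) ` {1..<m}" by (rule imageI)
  hence "exm X N n m i s t \<in> (\<Union>s\<in>U. (\<lambda>t. exm X N n m i s t) ` {1..<m})" by (rule UN_I[OF sU])
  moreover have "i \<in> {0..<n}" using i by simp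
  ultimately have exS: "exm X N n m i s t \<in> S1" unfolding S1 by (rule UN_I[rotated])
  have "\<forall>N'. complete_cpnet n m N' \<and> acyclic_cpnet n N' \<and>
      (\<forall>x\<in>S1 \<union> {y}. concept n m X N' x = concept n m X N x) \<longrightarrow> j \<in> fst N' i"
  proof (intro allI impI)
    fix N' assume h: "complete_cpnet n m N' \<and> acyclic_cpnet n N' \<and>
      (\<forall>x\<in>S1 \<union> {y}. concept n m X N' x = concept n m X N x)"
    have c': "complete_cpnet n m N'" and ac': "acyclic_cpnet n N'" using h by auto
    have ag1: "concept n m X N' (exm X N n m i s t) = concept n m X N (exm X N n m i s t)" using h exS by blast
    have ag2: "concept n m X N' y = concept n m X N y" using h by blast
    have s1: "snd N' i w a b"
      using exm_facts(2)[OF m2 sp c ac sl i t c' ac' ag1] unfolding w_def[symmetric] rq_def[symmetric] a_def b_def .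
    have "snd N' i w' a b = snd N i w' a b"
      using agree_pair[OF m2 sp c ac c' ac' o' i ab anb] ag2 unfolding y_def by simp
    hence s2: "\<not> snd N' i w' a b" using eq_p nrp ab unfolding a_def b_def by simp
    show "j \<in> fst N' i"
    proof (rule ccontr)
      assume nj: "j \<notin> fst N' i"
      have "\<forall>l\<in>fst N' i. w l = w' l" using nj unfolding w'_def by auto
      hence "snd N' i w a b = snd N' i w' a b" using cp_dep[OF c' i o o' _ ab] by blast
      thus False using s1 s2 by simp
    qed
  qed
  thus ?thesis using yX by blast
qed

lemma ub:
  assumes m2: "m \<ge> 2" and kn: "k \<le> n - 1" and sp: "swap_space n m X" and c: "complete_cpnet n m N"
    and ac: "acyclic_cpnet n N" and kb: "k_bounded n k N" and U: "k_universal n m k U" and finU: "finite U"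
  shows "\<exists>S. teaching_set X (concept n m X N) (acyc_class n m k X) S \<and>
     card S \<le> card (cp_edges n N) + n * (m - 1) * card U"
proof -
  define S1 where "S1 = (\<Union>i\<in>{0..<n}. \<Union>s\<in>U. (\<lambda>t. exm X N n m i s t) ` {1..<m})"
  define Pe where "Pe e y = (\<forall>N'. complete_cpnet n m N' \<and> acyclic_cpnet n N' \<and>
      (\<forall>x\<in>S1 \<union> {y}. concept n m X N' x = concept n m X N x) \<longrightarrow> fst e \<in> fst N' (snd e))" for e y
  have Us: "\<forall>s\<in>U. length s = n - 1 \<and> set s \<subseteq> {1..m}" using U unfolding k_universal_def by blast
  have ex: "\<forall>e\<in>cp_edges n N. \<exists>y\<in>X. Pe e y"
  proof
    fix e assume e: "e \<in> cp_edges n N"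
    obtain j i where ji: "e = (j, i)" by (cases e) blast
    show "\<exists>y\<in>X. Pe e y" unfolding Pe_def ji fst_conv snd_conv
      by (rule edge_ex[OF m2 kn sp c ac kb U S1_def e[unfolded ji]])
  qed
  hence ex2: "\<forall>e\<in>cp_edges n N. \<exists>y. y \<in> X \<and> Pe e y" by blast
  obtain f where f: "\<forall>e\<in>cp_edges n N. f e \<in> X \<and> Pe e (f e)"
    using bchoice[OF ex2] by blast
  define S where "S = S1 \<union> f ` cp_edges n N"
  have finE: "finite (cp_edges n N)"
    using finite_subset[OF cp_edges_sub[OF c]] by simp
  have finS1: "finite S1" unfolding S1_def using finU by simp
  have cS1: "card S1 \<le> n * (m - 1) * card U"
  proof -
    have "card S1 \<le> (\<Sum>i\<in>{0..<n}. card (\<Union>s\<in>U. (\<lambda>t. exm X N n m i s t) ` {1..<m}))"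
      unfolding S1_def by (rule card_UN_le) simp
    also have "\<dots> \<le> (\<Sum>i\<in>{0..<n}. \<Sum>s\<in>U. card ((\<lambda>t. exm X N n m i s t) ` {1..<m}))"
      by (intro sum_mono card_UN_le finU)
    also have "\<dots> \<le> (\<Sum>i\<in>{0..<n}. \<Sum>s\<in>U. m - 1)"
    proof (intro sum_mono)
      fix i s
      have "card ((\<lambda>t. exm X N n m i s t) ` {1..<m}) \<le> card {1..<m}" by (rule card_image_le) simp
      thus "card ((\<lambda>t. exm X N n m i s t) ` {1..<m}) \<le> m - 1" by simp
    qed
    also have "\<dots> = n * (m - 1) * card U" by simp
    finally show ?thesis .
  qed
  have cS: "card S \<le> card (cp_edges n N) + n * (m - 1) * card U"
  proof -
    have "card S \<le> card S1 + card (f ` cp_edges n N)" unfolding S_def by (rule card_Un_le)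
    moreover have "card (f ` cp_edges n N) \<le> card (cp_edges n N)" by (rule card_image_le[OF finE])
    ultimately show ?thesis using cS1 by simp
  qed
  have S1X: "S1 \<subseteq> X"
  proof
    fix x assume "x \<in> S1"
    then obtain i s t where i: "i < n" and s: "s \<in> U" and t: "t \<in> {1..<m}" and x: "x = exm X N n m i s t"
      unfolding S1_def by auto
    have sl: "length s = n - 1" "set s \<subseteq> {1..m}" using Us s by auto
    have t': "0 < t" "t < m" using t by auto
    show "x \<in> X" unfolding x by (rule exm_facts(1)[OF m2 sp c ac sl i t'])
  qed
  have SX: "S \<subseteq> X" unfolding S_def using S1X f by blast
  have teach: "\<forall>c'\<in>acyc_class n m k X. (\<forall>x\<in>S. c' x = concept n m X N x) \<longrightarrow> c' = concept n m X N"
  proof (intro ballI impI)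
    fix c' assume "c' \<in> acyc_class n m k X" and agS: "\<forall>x\<in>S. c' x = concept n m X N x"
    then obtain N' where cN': "c' = concept n m X N'" and c': "complete_cpnet n m N'"
      and ac': "acyclic_cpnet n N'" and kb': "k_bounded n k N'"
      unfolding acyc_class_def by blast
    have ag: "\<forall>x\<in>S. concept n m X N' x = concept n m X N x" using agS cN' by simp
    have sub: "fst N i \<subseteq> fst N' i" if i: "i < n" for i
    proof
      fix j assume j: "j \<in> fst N i"
      hence e: "(j, i) \<in> cp_edges n N" using i unfolding cp_edges_def by auto
      have P: "Pe (j, i) (f (j, i))" using f e by blast
      have A: "\<forall>x\<in>S1 \<union> {f (j, i)}. concept n m X N' x = concept n m X N x"
        using ag e unfolding S_def by blast
      have imp: "complete_cpnet n m N' \<and> acyclic_cpnet n N' \<and>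
        (\<forall>x\<in>S1 \<union> {f (j, i)}. concept n m X N' x = concept n m X N x) \<longrightarrow> j \<in> fst N' i"
        using P unfolding Pe_def fst_conv snd_conv by (rule spec)
      show "j \<in> fst N' i" using imp A c' ac' by blast
    qed
    show "c' = concept n m X N"
    proof
      fix x
      show "c' x = concept n m X N x"
      proof (cases "x \<in> X")
        case False thus ?thesis unfolding cN' concept_def by simp
      next
        case True
        hence "is_swap n m (fst x) (snd x)" using sp unfolding swap_space_def by blast
        then obtain i where si: "swap_at n m i (fst x, snd x)" using swap_at_ex by blast
        hence si': "swap_at n m i x" by simp
        have i: "i < n" and oq: "outcome n m (snd x)" using si' unfolding swap_at_def by auto
        have ab: "fst x i < m" "snd x i < m" using si' i unfolding swap_at_def outcome_def by auto
        have cPa': "card (fst N' i) \<le> k" using kb' i unfolding k_bounded_def by simp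
        obtain s where sU: "s \<in> U" and sm: "\<forall>l\<in>fst N' i. mk n i s l = snd x l"
          using univ_match[OF U kn i cp_pa[OF c' i] cPa' oq] by blast
        have sl: "length s = n - 1" "set s \<subseteq> {1..m}" using Us sU by auto
        define w where "w = mk n i s"
        have o: "outcome n m w" unfolding w_def using mk_outcome[OF sl i] m2 by simp
        define r where "r = snd N i w"
        have sto: "strict_total_on {0..<m} r" unfolding r_def by (rule cp_sto[OF c i o])
        have sto': "strict_total_on {0..<m} (snd N' i w)" by (rule cp_sto[OF c' i o])
        have "\<forall>t. 0 < t \<and> t < m \<longrightarrow> snd N' i w (el m r t) (el m r (t - 1))"
        proof (intro allI impI)
          fix t assume t: "0 < t \<and> t < m"
          hence "t \<in> {1..<m}" by simp
          hence "exm X N n m i s t \<in> (\<lambda>t. exm X N n m i s t) ` {1..<m}" by (rule imageI)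
          hence "exm X N n m i s t \<in> (\<Union>s\<in>U. (\<lambda>t. exm X N n m i s t) ` {1..<m})" by (rule UN_I[OF sU])
          moreover have "i \<in> {0..<n}" using i by simp
          ultimately have "exm X N n m i s t \<in> S1" unfolding S1_def by (rule UN_I[rotated])
          hence "concept n m X N' (exm X N n m i s t) = concept n m X N (exm X N n m i s t)"
            using ag unfolding S_def by blast
          from exm_facts(2)[OF m2 sp c ac sl i _ _ c' ac' this] t
          show "snd N' i w (el m r t) (el m r (t - 1))" unfolding w_def r_def by blast
        qed
        hence d: "\<forall>a<m. \<forall>b<m. snd N' i w a b = r a b" by (rule determ[OF sto sto'])
        have q1: "snd N' i (snd x) (fst x i) (snd x i) = snd N' i w (fst x i) (snd x i)"
          using cp_dep[OF c' i oq o _ ab] sm unfolding w_def by simp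
        have q2: "snd N i (snd x) (fst x i) (snd x i) = snd N i w (fst x i) (snd x i)"
        proof -
          have "\<forall>j\<in>fst N i. snd x j = w j" using sm sub[OF i] unfolding w_def by auto
          thus ?thesis by (rule cp_dep[OF c i oq o _ ab])
        qed
        have "snd N' i (snd x) (fst x i) (snd x i) = snd N i (snd x) (fst x i) (snd x i)"
          using q1 q2 d ab unfolding r_def by simp
        thus ?thesis unfolding cN' using label[OF c ac m2 si'] label[OF c' ac' m2 si'] by simp
      qed
    qed
  qed
  have finS: "finite S" unfolding S_def using finS1 finE by simp
  have "teaching_set X (concept n m X N) (acyc_class n m k X) S"
    unfolding teaching_set_def using SX finS teach by blast
  thus ?thesis using cS by blast
qed

lemma geo_real: "(\<Sum>t<k. (real m - 1) * real m ^ t) = real m ^ k - 1"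
  by (induction k) (auto simp: algebra_simps)

lemma sum_split_real:
  assumes "k < n" and that: "m \<ge> 1"
  shows "real (\<Sum>t<n. (m - 1) * m ^ min t k) = real (n - k) * (real m - 1) * real m ^ k + (real m ^ k - 1)"
proof -
  have sp: "{..<n} = {..<k} \<union> {k..<n}" using assms by auto
  have "(\<Sum>t<n. (m - 1) * m ^ min t k) = (\<Sum>t\<in>{..<k} \<union> {k..<n}. (m - 1) * m ^ min t k)"
    by (rule arg_cong[OF sp])
  also have "\<dots> = (\<Sum>t<k. (m - 1) * m ^ min t k) + (\<Sum>t\<in>{k..<n}. (m - 1) * m ^ min t k)"
    by (rule sum.union_disjoint) auto
  also have "(\<Sum>t<k. (m - 1) * m ^ min t k) = (\<Sum>t<k. (m - 1) * m ^ t)" by (intro sum.cong) auto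
  also have "(\<Sum>t\<in>{k..<n}. (m - 1) * m ^ min t k) = (\<Sum>t\<in>{k..<n}. (m - 1) * m ^ k)" by (intro sum.cong) auto
  also have "\<dots> = (n - k) * ((m - 1) * m ^ k)" by simp
  finally have e: "(\<Sum>t<n. (m - 1) * m ^ min t k) = (\<Sum>t<k. (m - 1) * m ^ t) + (n - k) * ((m - 1) * m ^ k)" .
  have r1: "real (\<Sum>t<k. (m - 1) * m ^ t) = real m ^ k - 1"
    using geo_real[where k=k and m=m] that by (simp add: of_nat_diff)
  have r2: "real ((n - k) * ((m - 1) * m ^ k)) = real (n - k) * (real m - 1) * real m ^ k"
  proof -
    have m1: "real (m - 1) = real m - 1" using that by (simp add: of_nat_diff)
    show ?thesis by (simp only: of_nat_mult m1 of_nat_power mult.assoc)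
  qed
  show ?thesis unfolding e of_nat_add r1 r2 by simp
qed

lemma univ_exists:
  assumes "m \<ge> 1"
  shows "\<exists>S. finite S \<and> k_universal n m k S"
proof -
  define A where "A = {s. set s \<subseteq> {1..m} \<and> length s = n - 1}"
  have "finite A" unfolding A_def by (rule finite_lists_length_eq) simp
  moreover have "k_universal n m k A" unfolding k_universal_def
  proof (intro conjI ballI allI impI)
    fix s assume "s \<in> A" thus "length s = n - 1" "set s \<subseteq> {1..m}" unfolding A_def by auto
  next
    fix I v assume I: "I \<subseteq> {0..<n-1}" and v: "\<forall>i\<in>I. v i \<in> {1..m}"
    define s where "s = map (\<lambda>t. if t \<in> I then v t else 1) [0..<n-1]"
    have "s \<in> A" unfolding A_def s_def using v assms by auto
    moreover have "\<forall>i\<in>I. s ! i = v i" unfolding s_def using I by auto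
    ultimately show "\<exists>s\<in>A. \<forall>i\<in>I. s ! i = v i" by blast
  qed
  ultimately show ?thesis by blast
qed

theorem lemma10:
  fixes n m k :: nat and X :: "((nat \<Rightarrow> nat) \<times> (nat \<Rightarrow> nat)) set" and N :: cpnet
  assumes "n \<ge> 1" and "m \<ge> 2" and "k \<le> n - 1"
    and "swap_space n m X"
    and "complete_cpnet n m N" and "acyclic_cpnet n N" and "k_bounded n k N"
  shows "real (m - 1) * M_k n m k \<le> real (TD X (concept n m X N) (acyc_class n m k X))
    \<and> TD X (concept n m X N) (acyc_class n m k X)
        \<le> card (cp_edges n N) + n * (m - 1) * U_k n m k"
proof -
  note n1 = assms(1) and m2 = assms(2) and kn = assms(3) and sp = assms(4) and c = assms(5)
    and ac = assms(6) and kb = assms(7)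
  have "\<exists>t S. finite S \<and> k_universal n m k S \<and> card S = t" using univ_exists[of m n k] m2 by auto
  hence "\<exists>S. finite S \<and> k_universal n m k S \<and> card S = U_k n m k"
    unfolding U_k_def by (rule LeastI_ex[where P = "\<lambda>t. \<exists>S. finite S \<and> k_universal n m k S \<and> card S = t"])
  then obtain U where finU: "finite U" and U: "k_universal n m k U" and cU: "card U = U_k n m k" by blast
  obtain S where TS: "teaching_set X (concept n m X N) (acyc_class n m k X) S"
    and cS: "card S \<le> card (cp_edges n N) + n * (m - 1) * card U"
    using ub[OF m2 kn sp c ac kb U finU] by blast
  have up: "TD X (concept n m X N) (acyc_class n m k X) \<le> card S"
    unfolding TD_def using TS by (intro Least_le) blast
  have "\<exists>S. teaching_set X (concept n m X N) (acyc_class n m k X) S \<and> card S = TD X (concept n m X N) (acyc_class n m k X)"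
    unfolding TD_def
    by (rule LeastI_ex[where P = "\<lambda>t. \<exists>S. teaching_set X (concept n m X N) (acyc_class n m k X) S \<and> card S = t"]) (use TS in blast)
  then obtain S0 where TS0: "teaching_set X (concept n m X N) (acyc_class n m k X) S0"
    and cS0: "card S0 = TD X (concept n m X N) (acyc_class n m k X)" by blast
  have lb: "(\<Sum>t<n. (m - 1) * m ^ min t k) \<le> card S0" by (rule lb_nat[OF m2 sp c ac kb TS0])
  have kn': "k < n" using kn n1 by simp
  have "real (m - 1) * M_k n m k = real (n - k) * (real m - 1) * real m ^ k + (real m ^ k - 1)"
  proof -
    have "real m - 1 \<noteq> 0" using m2 by simp
    hence "(real m - 1) * ((real m ^ k - 1) / (real m - 1)) = real m ^ k - 1" by simp
    thus ?thesis unfolding M_k_def using m2 by (simp add: of_nat_diff algebra_simps)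
  qed
  also have "\<dots> = real (\<Sum>t<n. (m - 1) * m ^ min t k)" using sum_split_real[OF kn', of m] m2 by simp
  also have "\<dots> \<le> real (card S0)" using lb by (rule of_nat_mono)
  finally have lower: "real (m - 1) * M_k n m k \<le> real (TD X (concept n m X N) (acyc_class n m k X))"
    using cS0 by simp
  show ?thesis using lower up cS cU by simp
qed

end
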